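(* $\mathrm{L\text{-}ESO}_{[0,1]}[=,\mathrm{SUM},0,1]\equiv_{[0,1]}\mathrm{L\text{-}ESO}_{d[0,1]}[=,\mathrm{SUM}]$. The same equivalence holds when both logics are restricted to almost conjunctive $\ddot\exists^*\forall^*$-formulae.
   Context: Conventions on structures and $\mathrm{ESO}_{\mathbb R}$. Let $\tau$ be a finite relational vocabulary and $\sigma$ a finite functional vocabulary. An $\mathbb R$-structure of vocabulary $\tau\cup\sigma$ is a tuple $\mathfrak A=(A,\mathbb R,(R^{\mathfrak A})_{R\in\tau},(g^{\mathfrak A})_{g\in\sigma})$ where $A$ is a finite set with at least two elements, each $R^{\mathfrak A}\subseteq A^{\mathrm{ar}(R)}$ and each $g^{\mathfrak A}\colon A^{\mathrm{ar}(g)}\to\mathbb R$. For $S\subseteq\mathbb R$, $\mathfrak A$ is an $S$-structure if every $g^{\mathfrak A}$ takes values in $S$, and a $d[0,1]$-structure if every $g^{\mathfrak A}$ is a probability distribution on $A^{\mathrm{ar}(g)}$. If $\sigma=\emptyset$, $\mathfrak A$ is a finite structure. Numerical terms are built by $i::=c\mid f(\vec x)\mid i+i\mid i\times i\mid \mathrm{SUM}_{\vec y}\,i$, where $c\in\mathbb R$ is a constant, $f$ is a function symbol or function variable, and $\vec x,\vec y$ are tuples of first-order variables; under an assignment $s$, $f(\vec x)$ denotes $f^{\mathfrak A}(s(\vec x))$, $+,\times$ are real addition and multiplication, and $\mathrm{SUM}_{\vec y}\,i$ denotes $\sum_{\vec a\in A^{|\vec y|}}[i]_{s[\vec a/\vec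 y]}$ (the variables $\vec y$ become bound). For $O\subseteq\{+,\times,\mathrm{SUM}\}$, $E\subseteq\{=,<,\le\}$, $C\subseteq\mathbb R$, the formulae of $\mathrm{ESO}_{\mathbb R}[O,E,C]$ are given by $\phi::= x=y\mid\neg x=y\mid i\,e\,j\mid\neg\, i\,e\,j\mid R(\vec x)\mid\neg R(\vec x)\mid\phi\wedge\phi\mid\phi\vee\phi\mid\exists x\phi\mid\forall x\phi\mid\exists f\phi$, where $i,j$ are numerical terms using only operations in $O$ and constants in $C$, $e\in E$, $R\in\tau$, and $f$ is a function variable. Semantics is Tarskian: first-order variables range over $A$ and $\exists f$ ranges over all functions $A^{\mathrm{ar}(f)}\to\mathbb R$. For $S\subseteq\mathbb R$, $\mathrm{ESO}_S[O,E,C]$ has the same syntax but $\exists f$ ranges over functions $A^{\mathrm{ar}(f)}\to S$; in $\mathrm{ESO}_{d[0,1]}[O,E,C]$, $\exists f$ ranges over probability distributions on $A^{\mathrm{ar}(f)}$. Free function variables are interpreted like symbols of $\sigma$. We list the elements of $O,E,C$ together in brackets, e.g. $\mathrm{ESO}_{\mathbb R}[\le,+,\mathrm{SUM},0,1]$ means $O=\{+,\mathrm{SUM}\}$, $E=\{\le\}$, $C=\{0,1\}$. Fragments. The loose fragment $\mathrm{L\text{-}ESO}_S[O,E,C]$ of $\mathrm{ESO}_S[O,E,C]$ ($S$ a set of reals or $d[0,1]$) consists of the formulae containing no negated numerical atom $\neg\, i\,e\,j$. A formula is almost conjunctive if for every subformula $(\psi_1\vee\psi_2)$, at least one of $\psi_1,\psi_2$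 contains no numerical term. For a regular expression $L$ over $\{\ddot\exists,\exists,\forall\}$, the $L$-formulae of a logic are those in prenex form whose quantifier prefix belongs to $L$, where $\ddot\exists$ stands for an existential function quantifier and $\exists,\forall$ for first-order quantifiers (e.g. $\ddot\exists^*\forall^*$). Expressivity. For a formula $\phi$ and $X\subseteq\mathbb R$ or $X=d[0,1]$, $\mathrm{Struc}_X(\phi)$ is the class of pairs $(\mathfrak A,s)$ with $\mathfrak A$ an $X$-structure and $s$ an assignment of the free first-order variables such that $\mathfrak A\models_s\phi$. For logics $\mathcal L,\mathcal L'$, $\mathcal L\le_X\mathcal L'$ means every $\phi\in\mathcal L$ has some $\psi\in\mathcal L'$ with $\mathrm{Struc}_X(\phi)=\mathrm{Struc}_X(\psi)$; $\equiv_X$ means $\le_X$ in both directions. *)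

theory Defs
  imports Complex_Main
begin

text \<open>Names of function symbols / function variables and of relation symbols are pairs
  (identifier, arity); the arity is the second component.  Structures have as universe
  a finite subset of nat with at least two elements (every finite structure is isomorphic
  to one of these).\<close>

type_synonym fname = "nat \<times> nat"
type_synonym rname = "nat \<times> nat"

datatype numop = OPlus | OTimes | OSum
datatype cmp = CEq | CLt | CLe

datatype nterm =
    NConst real
  | NApp fname "nat list"
  | NPlus nterm nterm
  | NTimes nterm nterm
  | NSum "nat list" nterm

datatype fm =
    VEq nat nat
  | VNeq nat nat
  | NumAt cmp nterm nterm
  | NegNumAt cmp nterm nterm
  | RelAt rname "nat list"
  | NRelAt rname "nat list"
  | Conj fm fm
  | Disj fm fm
  | QEx nat fm
  | QAll nat fm
  | FEx fname fm

definition tuples :: "nat set \<Rightarrow> nat \<Rightarrow> nat list set" where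
  "tuples A n = {xs. set xs \<subseteq> A \<and> length xs = n}"

fun upds :: "(nat \<Rightarrow> nat) \<Rightarrow> nat list \<Rightarrow> nat list \<Rightarrow> (nat \<Rightarrow> nat)" where
  "upds s (y # ys) (a # as) = upds (s(y := a)) ys as"
| "upds s _ _ = s"

fun teval :: "nat set \<Rightarrow> (fname \<Rightarrow> nat list \<Rightarrow> real) \<Rightarrow> (nat \<Rightarrow> nat) \<Rightarrow> nterm \<Rightarrow> real" where
  "teval A F s (NConst c) = c"
| "teval A F s (NApp f xs) = F f (map s xs)"
| "teval A F s (NPlus i j) = teval A F s i + teval A F s j"
| "teval A F s (NTimes i j) = teval A F s i * teval A F s j"
| "teval A F s (NSum ys i) = (\<Sum>as\<in>tuples A (length ys). teval A F (upds s ys as) i)"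

fun cmp_sem :: "cmp \<Rightarrow> real \<Rightarrow> real \<Rightarrow> bool" where
  "cmp_sem CEq a b = (a = b)"
| "cmp_sem CLt a b = (a < b)"
| "cmp_sem CLe a b = (a \<le> b)"

text \<open>Range of function quantifiers / of interpretations: values in a set S, or
  probability distributions (written d[0,1] in the paper).\<close>
datatype range = ValsIn "real set" | Dist

definition admissible :: "range \<Rightarrow> nat set \<Rightarrow> nat \<Rightarrow> (nat list \<Rightarrow> real) \<Rightarrow> bool" where
  "admissible X A k g = (case X of
      ValsIn S \<Rightarrow> (\<forall>xs\<in>tuples A k. g xs \<in> S)
    | Dist \<Rightarrow> (\<forall>xs\<in>tuples A k. 0 \<le> g xs) \<and> (\<Sum>xs\<in>tuples A k. g xs) = 1)"

fun sat :: "range \<Rightarrow> nat set \<Rightarrow> (rname \<Rightarrow> nat list \<Rightarrow> bool) \<Rightarrow> (fname \<Rightarrow> nat list \<Rightarrow> real)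
            \<Rightarrow> (nat \<Rightarrow> nat) \<Rightarrow> fm \<Rightarrow> bool" where
  "sat Q A R F s (VEq x y) = (s x = s y)"
| "sat Q A R F s (VNeq x y) = (s x \<noteq> s y)"
| "sat Q A R F s (NumAt c i j) = cmp_sem c (teval A F s i) (teval A F s j)"
| "sat Q A R F s (NegNumAt c i j) = (\<not> cmp_sem c (teval A F s i) (teval A F s j))"
| "sat Q A R F s (RelAt r xs) = R r (map s xs)"
| "sat Q A R F s (NRelAt r xs) = (\<not> R r (map s xs))"
| "sat Q A R F s (Conj a b) = (sat Q A R F s a \<and> sat Q A R F s b)"
| "sat Q A R F s (Disj a b) = (sat Q A R F s a \<or> sat Q A R F s b)"
| "sat Q A R F s (QEx x a) = (\<exists>v\<in>A. sat Q A R F (s(x := v)) a)"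
| "sat Q A R F s (QAll x a) = (\<forall>v\<in>A. sat Q A R F (s(x := v)) a)"
| "sat Q A R F s (FEx f a) = (\<exists>g. admissible Q A (snd f) g \<and> sat Q A R (F(f := g)) s a)"

fun term_ok :: "numop set \<Rightarrow> real set \<Rightarrow> nterm \<Rightarrow> bool" where
  "term_ok Ops C (NConst c) = (c \<in> C)"
| "term_ok Ops C (NApp f xs) = (length xs = snd f)"
| "term_ok Ops C (NPlus i j) = (OPlus \<in> Ops \<and> term_ok Ops C i \<and> term_ok Ops C j)"
| "term_ok Ops C (NTimes i j) = (OTimes \<in> Ops \<and> term_ok Ops C i \<and> term_ok Ops C j)"
| "term_ok Ops C (NSum ys i) = (OSum \<in> Ops \<and> term_ok Ops C i)"

fun fm_ok :: "numop set \<Rightarrow> cmp set \<Rightarrow> real set \<Rightarrow> fm \<Rightarrow> bool" where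
  "fm_ok Ops E C (VEq x y) = True"
| "fm_ok Ops E C (VNeq x y) = True"
| "fm_ok Ops E C (NumAt c i j) = (c \<in> E \<and> term_ok Ops C i \<and> term_ok Ops C j)"
| "fm_ok Ops E C (NegNumAt c i j) = (c \<in> E \<and> term_ok Ops C i \<and> term_ok Ops C j)"
| "fm_ok Ops E C (RelAt r xs) = (length xs = snd r)"
| "fm_ok Ops E C (NRelAt r xs) = (length xs = snd r)"
| "fm_ok Ops E C (Conj a b) = (fm_ok Ops E C a \<and> fm_ok Ops E C b)"
| "fm_ok Ops E C (Disj a b) = (fm_ok Ops E C a \<and> fm_ok Ops E C b)"
| "fm_ok Ops E C (QEx x a) = fm_ok Ops E C a"
| "fm_ok Ops E C (QAll x a) = fm_ok Ops E C a"
| "fm_ok Ops E C (FEx f a) = fm_ok Ops E C a"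

fun no_negnum :: "fm \<Rightarrow> bool" where
  "no_negnum (NegNumAt c i j) = False"
| "no_negnum (Conj a b) = (no_negnum a \<and> no_negnum b)"
| "no_negnum (Disj a b) = (no_negnum a \<and> no_negnum b)"
| "no_negnum (QEx x a) = no_negnum a"
| "no_negnum (QAll x a) = no_negnum a"
| "no_negnum (FEx f a) = no_negnum a"
| "no_negnum _ = True"

fun has_num :: "fm \<Rightarrow> bool" where
  "has_num (NumAt c i j) = True"
| "has_num (NegNumAt c i j) = True"
| "has_num (Conj a b) = (has_num a \<or> has_num b)"
| "has_num (Disj a b) = (has_num a \<or> has_num b)"
| "has_num (QEx x a) = has_num a"
| "has_num (QAll x a) = has_num a"
| "has_num (FEx f a) = has_num a"
| "has_num _ = False"

fun almost_conj :: "fm \<Rightarrow> bool" where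
  "almost_conj (Disj a b) = ((\<not> has_num a \<or> \<not> has_num b) \<and> almost_conj a \<and> almost_conj b)"
| "almost_conj (Conj a b) = (almost_conj a \<and> almost_conj b)"
| "almost_conj (QEx x a) = almost_conj a"
| "almost_conj (QAll x a) = almost_conj a"
| "almost_conj (FEx f a) = almost_conj a"
| "almost_conj _ = True"

fun qfree :: "fm \<Rightarrow> bool" where
  "qfree (QEx x a) = False"
| "qfree (QAll x a) = False"
| "qfree (FEx f a) = False"
| "qfree (Conj a b) = (qfree a \<and> qfree b)"
| "qfree (Disj a b) = (qfree a \<and> qfree b)"
| "qfree _ = True"

fun univ_prefix :: "fm \<Rightarrow> bool" where
  "univ_prefix (QAll x a) = univ_prefix a"
| "univ_prefix a = qfree a"

fun eso_univ :: "fm \<Rightarrow> bool" where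
  "eso_univ (FEx f a) = eso_univ a"
| "eso_univ a = univ_prefix a"

definition L_ESO :: "numop set \<Rightarrow> cmp set \<Rightarrow> real set \<Rightarrow> fm \<Rightarrow> bool" where
  "L_ESO Ops E C \<phi> = (fm_ok Ops E C \<phi> \<and> no_negnum \<phi>)"

definition is_structure :: "range \<Rightarrow> nat set \<Rightarrow> (fname \<Rightarrow> nat list \<Rightarrow> real) \<Rightarrow> bool" where
  "is_structure X A F = (finite A \<and> 2 \<le> card A \<and> (\<forall>f. admissible X A (snd f) (F f)))"

text \<open>A logic is a pair (range of function quantifiers, set of formulas).\<close>
definition leq_on :: "range \<Rightarrow> range \<times> (fm \<Rightarrow> bool) \<Rightarrow> range \<times> (fm \<Rightarrow> bool) \<Rightarrow> bool" where
  "leq_on X L1 L2 = (\<forall>\<phi>. snd L1 \<phi> \<longrightarrow> (\<exists>\<psi>. snd L2 \<psi> \<and>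
      (\<forall>A R F s. is_structure X A F \<longrightarrow> (\<forall>x. s x \<in> A) \<longrightarrow>
         (sat (fst L1) A R F s \<phi> \<longleftrightarrow> sat (fst L2) A R F s \<psi>))))"

definition equiv_on :: "range \<Rightarrow> range \<times> (fm \<Rightarrow> bool) \<Rightarrow> range \<times> (fm \<Rightarrow> bool) \<Rightarrow> bool" where
  "equiv_on X L1 L2 = (leq_on X L1 L2 \<and> leq_on X L2 L1)"

end

theory Submission
  imports Defs
begin

lemma tuples_0[simp]: "tuples A 0 = {[]}"
  by (auto simp: tuples_def)

lemma tuples_Suc: "tuples A (Suc n) = (\<lambda>(a,l). a#l) ` (A \<times> tuples A n)"
  unfolding tuples_def
  by (auto simp: image_iff length_Suc_conv)

lemma tuples_len: "l \<in> tuples A n \<Longrightarrow> length l = n"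
  by (simp add: tuples_def)

lemma tuples_set: "l \<in> tuples A n \<Longrightarrow> set l \<subseteq> A"
  by (simp add: tuples_def)

lemma ball_tuples_Suc: "(\<forall>l\<in>tuples A (Suc n). P l) = (\<forall>a\<in>A. \<forall>l\<in>tuples A n. P (a#l))"
  by (auto simp: tuples_Suc)

lemma finite_tuples: "finite A \<Longrightarrow> finite (tuples A n)"
  unfolding tuples_def by (rule finite_lists_length_eq)

lemma card_tuples: "finite A \<Longrightarrow> card (tuples A n) = card A ^ n"
  unfolding tuples_def by (rule card_lists_length_eq)

lemma sum_tuples_Suc: "finite A \<Longrightarrow> (\<Sum>l\<in>tuples A (Suc n). h l) = (\<Sum>a\<in>A. \<Sum>l\<in>tuples A n. h (a#l))"
proof -
  assume fin: "finite A"
  have inj: "inj_on (\<lambda>(a,l). a#l) (A \<times> tuples A n)" by (auto simp: inj_on_def)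
  have "(\<Sum>l\<in>tuples A (Suc n). h l) = (\<Sum>p\<in>A \<times> tuples A n. h ((\<lambda>(a,l). a#l) p))"
    unfolding tuples_Suc by (rule sum.reindex[OF inj, unfolded comp_def])
  also have "\<dots> = (\<Sum>(a,l)\<in>A \<times> tuples A n. h (a#l))"
    by (simp add: case_prod_beta)
  also have "\<dots> = (\<Sum>a\<in>A. \<Sum>l\<in>tuples A n. h (a#l))"
    by (rule sum.cartesian_product[symmetric])
  finally show ?thesis .
qed

lemma sum_tuples_append: "finite A \<Longrightarrow>
  (\<Sum>l\<in>tuples A (p+q). h l) = (\<Sum>l\<in>tuples A p. \<Sum>m\<in>tuples A q. h (l@m))"
proof (induction p arbitrary: h)
  case 0 then show ?case by simp
next
  case (Suc p)
  have "(\<Sum>l\<in>tuples A (Suc p + q). h l) = (\<Sum>a\<in>A. \<Sum>l\<in>tuples A (p+q). h (a#l))"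
    using sum_tuples_Suc[OF Suc.prems] by simp
  also have "\<dots> = (\<Sum>a\<in>A. \<Sum>l\<in>tuples A p. \<Sum>m\<in>tuples A q. h (a#l@m))"
    using Suc.IH[OF Suc.prems] by simp
  also have "\<dots> = (\<Sum>l\<in>tuples A (Suc p). \<Sum>m\<in>tuples A q. h (l@m))"
    using sum_tuples_Suc[OF Suc.prems, where n=p and h="\<lambda>l. \<Sum>m\<in>tuples A q. h (l@m)"] by simp
  finally show ?case .
qed

lemma sum_tuples_2: "finite A \<Longrightarrow> (\<Sum>l\<in>tuples A 2. h l) = (\<Sum>a\<in>A. \<Sum>b\<in>A. h [a,b])"
  by (simp add: numeral_2_eq_2 sum_tuples_Suc)

lemma tuples_nonempty: "A \<noteq> {} \<Longrightarrow> \<exists>l. l \<in> tuples A n"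
  by (rule exI[of _ "replicate n (SOME a. a \<in> A)"]) (auto simp: tuples_def some_in_eq)

lemma ball_tuples_take: assumes "k \<le> K" "A \<noteq> {}"
  shows "(\<forall>l\<in>tuples A K. P (take k l)) = (\<forall>l\<in>tuples A k. P l)"
proof
  assume H: "\<forall>l\<in>tuples A K. P (take k l)"
  show "\<forall>l\<in>tuples A k. P l"
  proof
    fix l assume l: "l \<in> tuples A k"
    obtain m where m: "m \<in> tuples A (K - k)" using tuples_nonempty[OF assms(2)] by blast
    have "l @ m \<in> tuples A K" using l m assms(1) by (auto simp: tuples_def)
    then have "P (take k (l@m))" using H by blast
    then show "P l" using l by (simp add: tuples_def)
  qed
next
  assume H: "\<forall>l\<in>tuples A k. P l"
  show "\<forall>l\<in>tuples A K. P (take k l)"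
  proof
    fix l assume "l \<in> tuples A K"
    then have "take k l \<in> tuples A k" using assms(1) set_take_subset[of k l] by (auto simp: tuples_def)
    then show "P (take k l)" using H by blast
  qed
qed

lemma upds_notin: "x \<notin> set ys \<Longrightarrow> upds s ys as x = s x"
  by (induction s ys as rule: upds.induct) auto

lemma upds_in_same: "x \<in> set ys \<Longrightarrow> length as = length ys \<Longrightarrow> upds s ys as x = upds s' ys as x"
proof (induction ys arbitrary: s s' as)
  case Nil then show ?case by simp
next
  case (Cons y ys)
  then obtain a as' where as: "as = a # as'" by (cases as) auto
  show ?case
  proof (cases "x \<in> set ys")
    case True then show ?thesis using Cons as by simp
  next
    case False then have "x = y" using Cons by simp
    then show ?thesis using False as by (simp add: upds_notin)
  qed
qed

lemma upds_nth: "distinct ys \<Longrightarrow> length as = length ys \<Longrightarrow> i < length ys \<Longrightarrow> upds s ys as (ys!i) = as!i"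
proof (induction ys arbitrary: s as i)
  case Nil then show ?case by simp
next
  case (Cons y ys)
  then obtain a as' where as: "as = a # as'" by (cases as) auto
  show ?case
  proof (cases i)
    case 0 then show ?thesis using Cons as by (simp add: upds_notin)
  next
    case (Suc j) then show ?thesis using Cons as by simp
  qed
qed

lemma upds_map: "distinct ys \<Longrightarrow> length as = length ys \<Longrightarrow> map (upds s ys as) ys = as"
  by (rule nth_equalityI) (auto simp: upds_nth)

lemma upds_range: "\<forall>x. s x \<in> A \<Longrightarrow> set as \<subseteq> A \<Longrightarrow> upds s ys as x \<in> A"
  by (induction s ys as rule: upds.induct) auto

fun fnt :: "nterm \<Rightarrow> fname set" where
  "fnt (NConst c) = {}"
| "fnt (NApp f xs) = {f}"
| "fnt (NPlus i j) = fnt i \<union> fnt j"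
| "fnt (NTimes i j) = fnt i \<union> fnt j"
| "fnt (NSum ys i) = fnt i"

fun fnf :: "fm \<Rightarrow> fname set" where
  "fnf (NumAt c i j) = fnt i \<union> fnt j"
| "fnf (NegNumAt c i j) = fnt i \<union> fnt j"
| "fnf (Conj a b) = fnf a \<union> fnf b"
| "fnf (Disj a b) = fnf a \<union> fnf b"
| "fnf (QEx x a) = fnf a"
| "fnf (QAll x a) = fnf a"
| "fnf (FEx f a) = insert f (fnf a)"
| "fnf _ = {}"

fun vt :: "nterm \<Rightarrow> nat set" where
  "vt (NConst c) = {}"
| "vt (NApp f xs) = set xs"
| "vt (NPlus i j) = vt i \<union> vt j"
| "vt (NTimes i j) = vt i \<union> vt j"
| "vt (NSum ys i) = set ys \<union> vt i"

fun vf :: "fm \<Rightarrow> nat set" where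
  "vf (VEq x y) = {x, y}"
| "vf (VNeq x y) = {x, y}"
| "vf (NumAt c i j) = vt i \<union> vt j"
| "vf (NegNumAt c i j) = vt i \<union> vt j"
| "vf (RelAt r xs) = set xs"
| "vf (NRelAt r xs) = set xs"
| "vf (Conj a b) = vf a \<union> vf b"
| "vf (Disj a b) = vf a \<union> vf b"
| "vf (QEx x a) = insert x (vf a)"
| "vf (QAll x a) = insert x (vf a)"
| "vf (FEx f a) = vf a"

fun bndP :: "fm \<Rightarrow> fname set" where
  "bndP (FEx f a) = insert f (bndP a)"
| "bndP (QAll x a) = bndP a"
| "bndP _ = {}"

lemma finite_fnt: "finite (fnt t)" by (induction t) auto
lemma finite_fnf: "finite (fnf \<phi>)" by (induction \<phi>) (auto simp: finite_fnt)
lemma finite_vt: "finite (vt t)" by (induction t) auto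
lemma finite_vf: "finite (vf \<phi>)" by (induction \<phi>) (auto simp: finite_vt)
lemma bndP_fnf: "bndP \<phi> \<subseteq> fnf \<phi>" by (induction \<phi>) auto

definition agree :: "fname set \<Rightarrow> (fname \<Rightarrow> nat list \<Rightarrow> real) \<Rightarrow> (fname \<Rightarrow> nat list \<Rightarrow> real) \<Rightarrow> bool" where
  "agree S F G = (\<forall>h\<in>S. \<forall>xs. length xs = snd h \<longrightarrow> F h xs = G h xs)"

lemma teval_agree: "term_ok Ops C t \<Longrightarrow> agree (fnt t) F G \<Longrightarrow> teval A F s t = teval A G s t"
proof (induction t arbitrary: s)
  case (NSum ys i) then show ?case by simp
qed (auto simp: agree_def)

lemma sat_agree: "fm_ok Ops E C \<phi> \<Longrightarrow> agree (fnf \<phi>) F G \<Longrightarrow> sat Q A R F s \<phi> = sat Q A R G s \<phi>"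
proof (induction \<phi> arbitrary: F G s)
  case (NumAt c i j) then show ?case using teval_agree[of Ops C i F G A s] teval_agree[of Ops C j F G A s]
    by (auto simp: agree_def)
next
  case (NegNumAt c i j) then show ?case using teval_agree[of Ops C i F G A s] teval_agree[of Ops C j F G A s]
    by (auto simp: agree_def)
next
  case (Conj a b)
  have "sat Q A R F s a = sat Q A R G s a" by (rule Conj.IH) (use Conj.prems in \<open>auto simp: agree_def\<close>)
  moreover have "sat Q A R F s b = sat Q A R G s b" by (rule Conj.IH) (use Conj.prems in \<open>auto simp: agree_def\<close>)
  ultimately show ?case by simp
next
  case (Disj a b)
  have "sat Q A R F s a = sat Q A R G s a" by (rule Disj.IH) (use Disj.prems in \<open>auto simp: agree_def\<close>)
  moreover have "sat Q A R F s b = sat Q A R G s b" by (rule Disj.IH) (use Disj.prems in \<open>auto simp: agree_def\<close>)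
  ultimately show ?case by simp
next
  case (FEx f a)
  have "\<And>g. agree (fnf a) (F(f:=g)) (G(f:=g))" using FEx.prems by (auto simp: agree_def)
  then have eq: "\<And>g. sat Q A R (F(f:=g)) s a = sat Q A R (G(f:=g)) s a" using FEx.IH FEx.prems by simp
  show ?case by (simp only: sat.simps eq)
next
  case (QEx x a)
  then show ?case by simp
next
  case (QAll x a)
  then show ?case by simp
next
  case (RelAt r xs) then show ?case by simp
next
  case (NRelAt r xs) then show ?case by simp
qed auto

lemma teval_vagree: "\<forall>x\<in>vt t. s x = s' x \<Longrightarrow> teval A F s t = teval A F s' t"
proof (induction t arbitrary: s s')
  case (NSum ys i)
  have "\<And>as. as \<in> tuples A (length ys) \<Longrightarrow> teval A F (upds s ys as) i = teval A F (upds s' ys as) i"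
  proof -
    fix as assume as: "as \<in> tuples A (length ys)"
    show "teval A F (upds s ys as) i = teval A F (upds s' ys as) i"
    proof (rule NSum.IH, rule ballI)
      fix x assume x: "x \<in> vt i"
      show "upds s ys as x = upds s' ys as x"
      proof (cases "x \<in> set ys")
        case True then show ?thesis using upds_in_same tuples_len[OF as] by blast
      next
        case False then show ?thesis using NSum.prems x by (simp add: upds_notin)
      qed
    qed
  qed
  then show ?case by simp
next
  case (NApp f xs) then have "map s xs = map s' xs" by auto
  then show ?case by (simp only: teval.simps)
next
  case (NPlus i j)
  have "teval A F s i = teval A F s' i" using NPlus by (intro NPlus.IH) auto
  moreover have "teval A F s j = teval A F s' j" using NPlus by (intro NPlus.IH) auto
  ultimately show ?case by simp
next
  case (NTimes i j)
  have "teval A F s i = teval A F s' i" using NTimes by (intro NTimes.IH) auto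
  moreover have "teval A F s j = teval A F s' j" using NTimes by (intro NTimes.IH) auto
  ultimately show ?case by simp
qed auto

lemma sat_vagree: "\<forall>x\<in>vf \<phi>. s x = s' x \<Longrightarrow> sat Q A R F s \<phi> = sat Q A R F s' \<phi>"
proof (induction \<phi> arbitrary: s s' F)
  case (NumAt c i j) then show ?case using teval_vagree[of i s s' A F] teval_vagree[of j s s' A F] by auto
next
  case (NegNumAt c i j) then show ?case using teval_vagree[of i s s' A F] teval_vagree[of j s s' A F] by auto
next
  case (RelAt r xs) then have "map s xs = map s' xs" by auto
  then show ?case by (simp only: sat.simps)
next
  case (NRelAt r xs) then have "map s xs = map s' xs" by auto
  then show ?case by (simp only: sat.simps)
next
  case (Conj a b)
  have "sat Q A R F s a = sat Q A R F s' a" by (rule Conj.IH) (use Conj.prems in auto)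
  moreover have "sat Q A R F s b = sat Q A R F s' b" by (rule Conj.IH) (use Conj.prems in auto)
  ultimately show ?case by simp
next
  case (Disj a b)
  have "sat Q A R F s a = sat Q A R F s' a" by (rule Disj.IH) (use Disj.prems in auto)
  moreover have "sat Q A R F s b = sat Q A R F s' b" by (rule Disj.IH) (use Disj.prems in auto)
  ultimately show ?case by simp
next
  case (QEx x a)
  have "\<And>v. sat Q A R F (s(x:=v)) a = sat Q A R F (s'(x:=v)) a" by (rule QEx.IH) (use QEx.prems in auto)
  then show ?case by simp
next
  case (QAll x a)
  have "\<And>v. sat Q A R F (s(x:=v)) a = sat Q A R F (s'(x:=v)) a" by (rule QAll.IH) (use QAll.prems in auto)
  then show ?case by simp
qed auto

lemma sat_bnd_indep: "f \<in> bndP a \<Longrightarrow> sat Q A R (F(f:=g)) s a = sat Q A R F s a"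
proof (induction a arbitrary: F s)
  case (FEx h b)
  show ?case
  proof (cases "h = f")
    case True
    then show ?thesis by (simp only: sat.simps fun_upd_upd)
  next
    case False
    then have fb: "f \<in> bndP b" using FEx.prems by simp
    have eq: "\<And>k. sat Q A R (F(f:=g, h:=k)) s b = sat Q A R (F(h:=k)) s b"
    proof -
      fix k
      have "F(f:=g, h:=k) = F(h:=k, f:=g)" using False by (rule fun_upd_twist[symmetric])
      then show "sat Q A R (F(f:=g, h:=k)) s b = sat Q A R (F(h:=k)) s b" using FEx.IH[OF fb, of "F(h:=k)" s] by metis
    qed
    show ?thesis by (simp only: sat.simps eq)
  qed
qed auto

definition con1 :: "fname \<Rightarrow> fm" where
  "con1 f = NumAt CEq (NSum [0..<snd f] (NApp f [0..<snd f])) (NConst 1)"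

fun trG2 :: "fm \<Rightarrow> fm" where
  "trG2 (FEx f a) = FEx f (Conj (con1 f) (trG2 a))"
| "trG2 (Conj a b) = Conj (trG2 a) (trG2 b)"
| "trG2 (Disj a b) = Disj (trG2 a) (trG2 b)"
| "trG2 (QEx x a) = QEx x (trG2 a)"
| "trG2 (QAll x a) = QAll x (trG2 a)"
| "trG2 a = a"

definition cons1 :: "fname list \<Rightarrow> fm" where
  "cons1 cs = foldr (\<lambda>f c. Conj (con1 f) c) cs (VEq 0 0)"

fun trP2 :: "fname list \<Rightarrow> fm \<Rightarrow> fm" where
  "trP2 cs (FEx f a) = FEx f (trP2 (f#cs) a)"
| "trP2 cs (QAll x a) = QAll x (trP2 cs a)"
| "trP2 cs a = Conj (cons1 cs) (trG2 a)"

definition sum1 :: "nat set \<Rightarrow> nat \<Rightarrow> (nat list \<Rightarrow> real) \<Rightarrow> bool" where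
  "sum1 A k g = ((\<Sum>xs\<in>tuples A k. g xs) = 1)"

lemma sat_con1: "sat Q A R F s (con1 f) = sum1 A (snd f) (F f)"
proof -
  have "(\<Sum>as\<in>tuples A (snd f). F f (map (upds s [0..<snd f] as) [0..<snd f]))
       = (\<Sum>as\<in>tuples A (snd f). F f as)"
    by (rule sum.cong) (auto simp: upds_map tuples_len)
  then show ?thesis by (simp add: con1_def sum1_def)
qed

lemma sat_cons1: "sat Q A R F s (cons1 cs) = (\<forall>f\<in>set cs. sum1 A (snd f) (F f))"
  by (induction cs) (auto simp: cons1_def sat_con1)

lemma adm_dist: "finite A \<Longrightarrow>
  admissible Dist A k g = (admissible (ValsIn {0..1}) A k g \<and> sum1 A k g)"
proof -
  assume fin: "finite A"
  have "g xs \<le> 1" if "\<forall>xs\<in>tuples A k. 0 \<le> g xs" "(\<Sum>xs\<in>tuples A k. g xs) = 1" "xs \<in> tuples A k" for xs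
    using member_le_sum[of xs "tuples A k" g] that finite_tuples[OF fin] by auto
  then show ?thesis by (auto simp: admissible_def sum1_def)
qed

lemma ex_adm01: "\<exists>g. admissible (ValsIn {0..1}) A k g"
  by (rule exI[of _ "\<lambda>_. 0"]) (simp add: admissible_def)

lemma ex_dist: "finite A \<Longrightarrow> A \<noteq> {} \<Longrightarrow> \<exists>g. admissible Dist A k g"
proof -
  assume fin: "finite A" and ne: "A \<noteq> {}"
  have c: "card (tuples A k) > 0"
    using finite_tuples[OF fin] tuples_nonempty[OF ne] card_gt_0_iff by blast
  show ?thesis
    by (rule exI[of _ "\<lambda>_. 1 / real (card (tuples A k))"]) (use c in \<open>simp add: admissible_def\<close>)
qed

lemma trG2_sat: "finite A \<Longrightarrow> sat (ValsIn {0..1}) A R F s (trG2 \<phi>) = sat Dist A R F s \<phi>"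
  by (induction \<phi> arbitrary: F s) (auto simp: adm_dist sat_con1)

lemma trP2_sat: assumes fin: "finite A" and ne: "A \<noteq> {}"
  shows "sat (ValsIn {0..1}) A R F s (trP2 cs \<phi>)
     = ((\<forall>h\<in>set cs - bndP \<phi>. sum1 A (snd h) (F h)) \<and> sat Dist A R F s \<phi>)"
proof (induction \<phi> arbitrary: cs F s)
  case (QAll x a)
  have e: "\<And>v. sat (ValsIn {0..1}) A R F (s(x:=v)) (trP2 cs a)
     = ((\<forall>h\<in>set cs - bndP a. sum1 A (snd h) (F h)) \<and> sat Dist A R F (s(x:=v)) a)"
    by (rule QAll.IH)
  show ?case using ne by (simp only: sat.simps bndP.simps trP2.simps e) blast
next
  case (FEx f a)
  let ?P = "\<lambda>G. sat Dist A R G s a"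
  have IH: "\<And>g. sat (ValsIn {0..1}) A R (F(f:=g)) s (trP2 (f#cs) a)
     = ((\<forall>h\<in>set (f#cs) - bndP a. sum1 A (snd h) ((F(f:=g)) h)) \<and> ?P (F(f:=g)))"
    by (rule FEx.IH)
  show ?case
  proof (cases "f \<in> bndP a")
    case True
    have ind: "\<And>g. ?P (F(f:=g)) = ?P F" using sat_bnd_indep[OF True] by blast
    have r: "\<And>g. (\<forall>h\<in>set (f#cs) - bndP a. sum1 A (snd h) ((F(f:=g)) h))
              = (\<forall>h\<in>set cs - bndP (FEx f a). sum1 A (snd h) (F h))"
      using True by auto
    show ?thesis using ind r IH ex_adm01[of A "snd f"] ex_dist[OF fin ne, of "snd f"]
      by (simp only: sat.simps trP2.simps) blast
  next
    case False
    have r: "\<And>g. (\<forall>h\<in>set (f#cs) - bndP a. sum1 A (snd h) ((F(f:=g)) h))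
              = (sum1 A (snd f) g \<and> (\<forall>h\<in>set cs - bndP (FEx f a). sum1 A (snd h) (F h)))"
      using False by auto
    show ?thesis using r IH adm_dist[OF fin] by (simp only: sat.simps trP2.simps) blast
  qed
qed (simp_all add: sat_cons1 trG2_sat[OF fin])

lemma term_ok_mono: "term_ok Ops C t \<Longrightarrow> C \<subseteq> C' \<Longrightarrow> term_ok Ops C' t"
  by (induction t) auto

lemma fm_ok_mono: "fm_ok Ops E C \<phi> \<Longrightarrow> C \<subseteq> C' \<Longrightarrow> fm_ok Ops E C' \<phi>"
  by (induction \<phi>) (auto intro: term_ok_mono)

lemma cons1_props: "fm_ok {OSum} {CEq} {0,1} (cons1 cs) \<and> no_negnum (cons1 cs) \<and> qfree (cons1 cs)
   \<and> almost_conj (cons1 cs)"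
  by (induction cs) (auto simp: cons1_def con1_def)

lemma con1_props: "fm_ok {OSum} {CEq} {0,1} (con1 f) \<and> no_negnum (con1 f)"
  by (auto simp: con1_def)

lemma trG2_ok: "fm_ok {OSum} {CEq} {0,1} \<phi> \<Longrightarrow> fm_ok {OSum} {CEq} {0,1} (trG2 \<phi>)"
  by (induction \<phi>) (auto simp: con1_props)

lemma trG2_nn: "no_negnum \<phi> \<Longrightarrow> no_negnum (trG2 \<phi>)"
  by (induction \<phi>) (auto simp: con1_props)

lemma trG2_qfree: "qfree \<phi> \<Longrightarrow> trG2 \<phi> = \<phi>"
  by (induction \<phi>) auto

lemma trP2_ok: "fm_ok {OSum} {CEq} {0,1} \<phi> \<Longrightarrow> fm_ok {OSum} {CEq} {0,1} (trP2 cs \<phi>)"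
  by (induction \<phi> arbitrary: cs) (auto simp: cons1_props trG2_ok simp del: trG2.simps)

lemma trP2_nn: "no_negnum \<phi> \<Longrightarrow> no_negnum (trP2 cs \<phi>)"
  by (induction \<phi> arbitrary: cs) (auto simp: cons1_props trG2_nn simp del: trG2.simps)

lemma trP2_univ: "univ_prefix \<phi> \<Longrightarrow> univ_prefix (trP2 cs \<phi>) \<and> (almost_conj \<phi> \<longrightarrow> almost_conj (trP2 cs \<phi>))"
  by (induction \<phi> arbitrary: cs) (auto simp: cons1_props trG2_qfree)

lemma trP2_eso: "eso_univ \<phi> \<Longrightarrow> eso_univ (trP2 cs \<phi>) \<and> (almost_conj \<phi> \<longrightarrow> almost_conj (trP2 cs \<phi>))"
proof (induction \<phi> arbitrary: cs)
  case (FEx f a) then show ?case by simp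
next
  case (QAll x a) then show ?case using trP2_univ[of "QAll x a" cs] by simp
qed (auto simp: cons1_props trG2_qfree)

lemma struct_ne: "is_structure X A F \<Longrightarrow> finite A \<and> A \<noteq> {}"
  by (auto simp: is_structure_def)

lemma trP2_sat0: "is_structure X A F \<Longrightarrow> sat (ValsIn {0..1}) A R F s (trP2 [] \<phi>) = sat Dist A R F s \<phi>"
  using trP2_sat[of A R F s "[]" \<phi>] struct_ne[of X A F] by simp

lemma part2: "leq_on (ValsIn {0..1}) (Dist, L_ESO {OSum} {CEq} {}) (ValsIn {0..1}, L_ESO {OSum} {CEq} {0,1})"
  unfolding leq_on_def
proof (intro allI impI)
  fix \<phi> assume "snd (Dist, L_ESO {OSum} {CEq} {}) \<phi>"
  then have ok: "fm_ok {OSum} {CEq} {0,1} \<phi>" "no_negnum \<phi>"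
    by (auto simp: L_ESO_def intro: fm_ok_mono)
  show "\<exists>\<psi>. snd (ValsIn {0..1}, L_ESO {OSum} {CEq} {0,1}) \<psi> \<and>
         (\<forall>A R F s. is_structure (ValsIn {0..1}) A F \<longrightarrow> (\<forall>x. s x \<in> A) \<longrightarrow>
            sat (fst (Dist, L_ESO {OSum} {CEq} {})) A R F s \<phi> =
            sat (fst (ValsIn {0..1}, L_ESO {OSum} {CEq} {0,1})) A R F s \<psi>)"
    by (rule exI[of _ "trP2 [] \<phi>"])
       (auto simp: L_ESO_def ok trP2_ok trP2_nn trP2_sat0 simp del: trP2.simps)
qed

lemma part2r: "leq_on (ValsIn {0..1})
   (Dist, \<lambda>\<phi>. L_ESO {OSum} {CEq} {} \<phi> \<and> almost_conj \<phi> \<and> eso_univ \<phi>)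
   (ValsIn {0..1}, \<lambda>\<phi>. L_ESO {OSum} {CEq} {0,1} \<phi> \<and> almost_conj \<phi> \<and> eso_univ \<phi>)"
  unfolding leq_on_def
proof (intro allI impI)
  fix \<phi> assume H: "snd (Dist, \<lambda>\<phi>. L_ESO {OSum} {CEq} {} \<phi> \<and> almost_conj \<phi> \<and> eso_univ \<phi>) \<phi>"
  then have ok: "fm_ok {OSum} {CEq} {0,1} \<phi>" "no_negnum \<phi>" "almost_conj \<phi>" "eso_univ \<phi>"
    by (auto simp: L_ESO_def intro: fm_ok_mono)
  show "\<exists>\<psi>. snd (ValsIn {0..1}, \<lambda>\<phi>. L_ESO {OSum} {CEq} {0,1} \<phi> \<and> almost_conj \<phi> \<and> eso_univ \<phi>) \<psi> \<and>
         (\<forall>A R F s. is_structure (ValsIn {0..1}) A F \<longrightarrow> (\<forall>x. s x \<in> A) \<longrightarrow>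
            sat (fst (Dist, \<lambda>\<phi>. L_ESO {OSum} {CEq} {} \<phi> \<and> almost_conj \<phi> \<and> eso_univ \<phi>)) A R F s \<phi> =
            sat (fst (ValsIn {0..1}, \<lambda>\<phi>. L_ESO {OSum} {CEq} {0,1} \<phi> \<and> almost_conj \<phi> \<and> eso_univ \<phi>)) A R F s \<psi>)"
    by (rule exI[of _ "trP2 [] \<phi>"])
       (auto simp: L_ESO_def ok trP2_ok trP2_nn trP2_sat0 trP2_eso simp del: trP2.simps)
qed

definition ren :: "nat \<Rightarrow> fname \<Rightarrow> fname" where
  "ren N f = (N + Suc (fst f), snd f + 2)"

definition decode :: "nat set \<Rightarrow> nat \<Rightarrow> (nat list \<Rightarrow> real) \<Rightarrow> nat list \<Rightarrow> real" where
  "decode A k d xs = real (card A) ^ k * (\<Sum>w\<in>A. d (xs @ [w,w]))"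

definition dec :: "nat \<Rightarrow> nat set \<Rightarrow> fname set \<Rightarrow> (fname \<Rightarrow> nat list \<Rightarrow> real) \<Rightarrow> fname \<Rightarrow> nat list \<Rightarrow> real" where
  "dec N A env F g = (if g \<in> env then decode A (snd g) (F (ren N g)) else F g)"

definition rowok :: "nat set \<Rightarrow> nat \<Rightarrow> (nat list \<Rightarrow> real) \<Rightarrow> bool" where
  "rowok A k d = (\<forall>bs\<in>tuples A k. real (card A) ^ k * (\<Sum>cs\<in>tuples A 2. d (bs @ cs)) = 1)"

definition encode :: "nat set \<Rightarrow> nat \<Rightarrow> (nat list \<Rightarrow> real) \<Rightarrow> nat list \<Rightarrow> real" where
  "encode A k g ys = (if ys ! k = ys ! Suc k then g (take k ys) / real (card A) ^ Suc k
      else (1 - g (take k ys)) / (real (card A) ^ Suc k * (real (card A) - 1)))"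

lemma sum_if_eq: "finite A \<Longrightarrow> a \<in> A \<Longrightarrow>
  (\<Sum>b\<in>A. if a = b then X else Y) = X + (real (card A) - 1) * (Y::real)"
proof -
  assume fin: "finite A" and a: "a \<in> A"
  have 1: "(\<Sum>b\<in>A. if a = b then X else Y) = (if a = a then X else Y) + (\<Sum>b\<in>A - {a}. if a = b then X else Y)"
    by (rule sum.remove[OF fin a])
  have 2: "(\<Sum>b\<in>A - {a}. if a = b then X else Y) = (\<Sum>b\<in>A - {a}. Y)"
    by (rule sum.cong) auto
  have 3: "(\<Sum>b\<in>A - {a}. Y) = real (card (A - {a})) * Y" by simp
  have 4: "card (A - {a}) = card A - 1" using fin a by simp
  have "card A > 0" using fin a by (auto simp: card_gt_0_iff)
  then have "1 \<le> card A" by simp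
  then have 5: "real (card A - 1) = real (card A) - 1" by (simp add: of_nat_diff)
  show ?thesis using 1 2 3 4 5 by simp
qed

lemma decode_encode: assumes fin: "finite A" and n2: "2 \<le> card A" and len: "length xs = k"
  shows "decode A k (encode A k g) xs = g xs"
proof -
  have "\<And>w. encode A k g (xs @ [w,w]) = g xs / real (card A) ^ Suc k"
    using len by (simp add: encode_def nth_append)
  then have "decode A k (encode A k g) xs = real (card A) ^ k * (real (card A) * (g xs / real (card A) ^ Suc k))"
    by (simp add: decode_def)
  also have "\<dots> = g xs" using n2 by (simp add: field_simps)
  finally show ?thesis .
qed

lemma aux_frac: "(c::real) \<noteq> 0 \<Longrightarrow> P \<noteq> 0 \<Longrightarrow> G/P + c*((1-G)/(P*c)) = 1/P"
  by (simp add: field_simps)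

lemma aux_sumc: "finite A \<Longrightarrow> 2 \<le> card A \<Longrightarrow> (\<Sum>a\<in>A. 1 / real (card A) ^ Suc k) = 1 / real (card A) ^ k"
  by (cases "A = {}") auto

lemma encode_row: assumes fin: "finite A" and n2: "2 \<le> card A" and bs: "bs \<in> tuples A k"
  shows "(\<Sum>cs\<in>tuples A 2. encode A k g (bs @ cs)) = 1 / real (card A) ^ k"
proof -
  let ?n = "real (card A)"
  let ?G = "g bs"
  have len: "length bs = k" using bs by (simp add: tuples_len)
  have pt: "\<And>a b. encode A k g (bs @ [a,b]) = (if a = b then ?G / ?n ^ Suc k else (1 - ?G) / (?n ^ Suc k * (?n - 1)))"
    using len by (simp add: encode_def nth_append)
  have n1: "?n - 1 \<noteq> 0" using n2 by simp
  have np: "?n ^ Suc k \<noteq> 0" using n2 by simp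
  have "(\<Sum>cs\<in>tuples A 2. encode A k g (bs @ cs)) = (\<Sum>a\<in>A. \<Sum>b\<in>A. encode A k g (bs @ [a,b]))"
    by (rule sum_tuples_2[OF fin])
  also have "\<dots> = (\<Sum>a\<in>A. \<Sum>b\<in>A. if a = b then ?G / ?n ^ Suc k else (1 - ?G) / (?n ^ Suc k * (?n - 1)))"
    by (simp only: pt)
  also have "\<dots> = (\<Sum>a\<in>A. ?G / ?n ^ Suc k + (?n - 1) * ((1 - ?G) / (?n ^ Suc k * (?n - 1))))"
    by (rule sum.cong[OF refl]) (rule sum_if_eq[OF fin])
  also have "\<dots> = (\<Sum>a\<in>A. 1 / ?n ^ Suc k)"
    by (simp only: aux_frac[OF n1 np])
  also have "\<dots> = 1 / ?n ^ k" by (rule aux_sumc[OF fin n2])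
  finally show ?thesis .
qed

lemma encode_adm: assumes fin: "finite A" and n2: "2 \<le> card A"
  and g: "admissible (ValsIn {0..1}) A k g"
  shows "admissible Dist A (k+2) (encode A k g) \<and> rowok A k (encode A k g)"
proof -
  let ?n = "real (card A)"
  have nn: "0 \<le> encode A k g ys" if ys: "ys \<in> tuples A (k+2)" for ys
  proof -
    have "take k ys \<in> tuples A k" using ys set_take_subset[of k ys] by (auto simp: tuples_def)
    then have "g (take k ys) \<in> {0..1}" using g by (auto simp: admissible_def)
    then show ?thesis using n2 by (auto simp: encode_def)
  qed
  have "(\<Sum>ys\<in>tuples A (k+2). encode A k g ys) = (\<Sum>bs\<in>tuples A k. \<Sum>cs\<in>tuples A 2. encode A k g (bs @ cs))"
    by (rule sum_tuples_append[OF fin])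
  also have "\<dots> = (\<Sum>bs\<in>tuples A k. 1 / ?n ^ k)"
    by (rule sum.cong) (simp_all add: encode_row[OF fin n2])
  also have "\<dots> = 1" using n2 by (simp add: card_tuples[OF fin])
  finally have s: "(\<Sum>ys\<in>tuples A (k+2). encode A k g ys) = 1" .
  have r: "rowok A k (encode A k g)"
    using n2 by (simp add: rowok_def encode_row[OF fin n2])
  have "admissible Dist A (k+2) (encode A k g)" unfolding admissible_def range.case
    using nn s by blast
  then show ?thesis using r by blast
qed

lemma decode_adm: assumes fin: "finite A" and d: "admissible Dist A (k+2) d" and r: "rowok A k d"
  shows "admissible (ValsIn {0..1}) A k (decode A k d)"
  unfolding admissible_def
proof (simp, intro ballI conjI)
  fix xs assume xs: "xs \<in> tuples A k"
  have nn: "\<And>a b. a \<in> A \<Longrightarrow> b \<in> A \<Longrightarrow> 0 \<le> d (xs @ [a,b])"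
    using d xs by (auto simp: admissible_def tuples_def)
  show "0 \<le> decode A k d xs" unfolding decode_def using nn by (auto intro!: mult_nonneg_nonneg sum_nonneg)
  have "(\<Sum>w\<in>A. d (xs @ [w,w])) \<le> (\<Sum>a\<in>A. \<Sum>b\<in>A. d (xs @ [a,b]))"
    by (rule sum_mono) (rule member_le_sum, use nn fin in auto)
  also have "\<dots> = (\<Sum>cs\<in>tuples A 2. d (xs @ cs))" by (rule sum_tuples_2[OF fin, symmetric])
  finally have "decode A k d xs \<le> real (card A) ^ k * (\<Sum>cs\<in>tuples A 2. d (xs @ cs))"
    unfolding decode_def by (rule mult_left_mono) simp
  also have "\<dots> = 1" using r xs by (simp add: rowok_def)
  finally show "decode A k d xs \<le> 1" .
qed

lemma sum_first: "finite A \<Longrightarrow>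
  (\<Sum>as\<in>tuples A (Suc k). h (as!0)) = real (card A) ^ k * (\<Sum>a\<in>A. (h a::real))"
  by (simp add: sum_tuples_Suc card_tuples sum_distrib_left sum_distrib_right mult.commute)

lemma drop_last2: "length as = k + 2 \<Longrightarrow> drop k as = [as!k, as!Suc k]"
  by (metis Cons_nth_drop_Suc add_2_eq_Suc' drop_all lessI less_add_Suc2 Suc_lessI order_refl
      add.commute lessI less_SucI)

lemma sum_last2: "finite A \<Longrightarrow>
  (\<Sum>as\<in>tuples A (k+2). h (drop k as)) = real (card A) ^ k * (\<Sum>cs\<in>tuples A 2. (h cs::real))"
proof -
  assume fin: "finite A"
  have "(\<Sum>as\<in>tuples A (k+2). h (drop k as)) = (\<Sum>bs\<in>tuples A k. \<Sum>cs\<in>tuples A 2. h (drop k (bs @ cs)))"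
    by (rule sum_tuples_append[OF fin])
  also have "\<dots> = (\<Sum>bs\<in>tuples A k. \<Sum>cs\<in>tuples A 2. h cs)"
    by (rule sum.cong[OF refl], rule sum.cong[OF refl]) (simp add: tuples_len)
  also have "\<dots> = real (card A) ^ k * (\<Sum>cs\<in>tuples A 2. h cs)"
    by (simp add: card_tuples[OF fin])
  finally show ?thesis .
qed

lemma sat_allQ: "sat Q A R F s (foldr QAll vs \<phi>) = (\<forall>as\<in>tuples A (length vs). sat Q A R F (upds s vs as) \<phi>)"
proof (induction vs arbitrary: s)
  case Nil then show ?case by simp
next
  case (Cons v vs)
  have "sat Q A R F s (foldr QAll (v#vs) \<phi>) = (\<forall>a\<in>A. \<forall>as\<in>tuples A (length vs). sat Q A R F (upds (s(v:=a)) vs as) \<phi>)"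
    by (simp only: foldr.simps o_apply sat.simps Cons.IH)
  also have "\<dots> = (\<forall>as\<in>tuples A (length (v#vs)). sat Q A R F (upds s (v#vs) as) \<phi>)"
    by (simp only: length_Cons ball_tuples_Suc upds.simps)
  finally show ?case .
qed

fun trt :: "nat \<Rightarrow> fname set \<Rightarrow> nterm \<Rightarrow> nterm" where
  "trt N env (NConst c) = (if c = 0 then NApp (N,2) [0,0] else NApp (N,0) [])"
| "trt N env (NApp g xs) = (if g \<in> env then NSum [Suc (sum_list xs)..<Suc (sum_list xs) + Suc (snd g)]
      (NApp (ren N g) (xs @ [Suc (sum_list xs), Suc (sum_list xs)])) else NApp g xs)"
| "trt N env (NPlus i j) = NPlus (trt N env i) (trt N env j)"
| "trt N env (NTimes i j) = NTimes (trt N env i) (trt N env j)"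
| "trt N env (NSum ys i) = NSum ys (trt N env i)"

lemma teval_bound: assumes fin: "finite A" and xs: "\<forall>x\<in>set xs. x < m"
  shows "teval A F s (NSum [m..<m + Suc k] (NApp d (xs @ [m,m]))) = decode A k (F d) (map s xs)"
proof -
  let ?ys = "[m..<m + Suc k]"
  have pt: "map (upds s ?ys as) (xs @ [m,m]) = map s xs @ [as!0, as!0]" if as: "as \<in> tuples A (Suc k)" for as
  proof -
    have len: "length as = length ?ys" using as by (simp add: tuples_len)
    have "map (upds s ?ys as) xs = map s xs" using xs by (auto simp: upds_notin)
    moreover have "upds s ?ys as (?ys ! 0) = as ! 0" by (rule upds_nth) (use len in auto)
    moreover have "?ys ! 0 = m" by (simp del: upt_Suc)
    ultimately show ?thesis by (simp del: upt_Suc)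
  qed
  have "teval A F s (NSum ?ys (NApp d (xs @ [m,m]))) = (\<Sum>as\<in>tuples A (Suc k). F d (map (upds s ?ys as) (xs @ [m,m])))"
    by (simp del: upt_Suc)
  also have "\<dots> = (\<Sum>as\<in>tuples A (Suc k). (\<lambda>w. F d (map s xs @ [w,w])) (as!0))"
    by (rule sum.cong[OF refl]) (simp only: pt)
  also have "\<dots> = decode A k (F d) (map s xs)"
    using sum_first[OF fin, where k=k and h="\<lambda>w. F d (map s xs @ [w,w])"] by (simp add: decode_def)
  finally show ?thesis .
qed

lemma trt_eval:
  assumes fin: "finite A" and u: "F (N,0) [] = 1" and e: "\<forall>a\<in>A. F (N,2) [a,a] = 0"
  shows "\<forall>x. s x \<in> A \<Longrightarrow> term_ok Ops {0,1} t \<Longrightarrow> teval A F s (trt N env t) = teval A (dec N A env F) s t"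
proof (induction t arbitrary: s)
  case (NConst c)
  then show ?case using u e by auto
next
  case (NApp g xs)
  show ?case
  proof (cases "g \<in> env")
    case True
    have "\<forall>x\<in>set xs. x < Suc (sum_list xs)" using member_le_sum_list[of _ xs] by (auto simp: le_imp_less_Suc)
    from teval_bound[OF fin this, of F s "snd g" "ren N g"]
    show ?thesis using True by (simp add: dec_def del: upt_Suc)
  next
    case False then show ?thesis by (simp add: dec_def)
  qed
next
  case (NSum ys i)
  have "\<And>as. as \<in> tuples A (length ys) \<Longrightarrow> teval A F (upds s ys as) (trt N env i) = teval A (dec N A env F) (upds s ys as) i"
    using NSum by (intro NSum.IH) (auto intro: upds_range dest: tuples_set)
  then show ?case by simp
qed auto

definition rowB :: "nat \<Rightarrow> nat \<Rightarrow> fname \<Rightarrow> fm" where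
  "rowB N V f = NumAt CEq (NSum [V + snd f..<V + snd f + snd f + 2]
      (NApp (ren N f) ([V..<V + snd f] @ [V + snd f + snd f, V + snd f + snd f + 1]))) (NApp (N,0) [])"

lemma sat_rowB: assumes fin: "finite A"
  shows "sat Q A R F s (rowB N V f) = (real (card A) ^ snd f * (\<Sum>cs\<in>tuples A 2. F (ren N f) (map s [V..<V + snd f] @ cs)) = F (N,0) [])"
proof -
  let ?k = "snd f"
  let ?ys = "[V + ?k..<V + ?k + ?k + 2]"
  let ?zs = "[V..<V + ?k] @ [V + ?k + ?k, V + ?k + ?k + 1]"
  have pt: "map (upds s ?ys as) ?zs = map s [V..<V + ?k] @ drop ?k as" if as: "as \<in> tuples A (?k + 2)" for as
  proof -
    have len: "length as = length ?ys" using as by (simp add: tuples_len)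
    have "map (upds s ?ys as) [V..<V + ?k] = map s [V..<V + ?k]" by (auto simp: upds_notin)
    moreover have "upds s ?ys as (?ys ! ?k) = as ! ?k" by (rule upds_nth) (use len in auto)
    moreover have "upds s ?ys as (?ys ! Suc ?k) = as ! Suc ?k" by (rule upds_nth) (use len in auto)
    moreover have "drop ?k as = [as ! ?k, as ! Suc ?k]" by (rule drop_last2) (use len in simp)
    moreover have "?ys ! ?k = V + ?k + ?k" by (simp del: upt_Suc)
    moreover have "?ys ! Suc ?k = V + ?k + ?k + 1" by (simp del: upt_Suc)
    ultimately show ?thesis by (simp del: upt_Suc)
  qed
  have "teval A F s (NSum ?ys (NApp (ren N f) ?zs)) = (\<Sum>as\<in>tuples A (?k+2). F (ren N f) (map (upds s ?ys as) ?zs))"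
    by (simp add: numeral_2_eq_2)
  also have "\<dots> = (\<Sum>as\<in>tuples A (?k+2). (\<lambda>cs. F (ren N f) (map s [V..<V + ?k] @ cs)) (drop ?k as))"
    by (rule sum.cong[OF refl]) (simp only: pt)
  also have "\<dots> = real (card A) ^ ?k * (\<Sum>cs\<in>tuples A 2. F (ren N f) (map s [V..<V + ?k] @ cs))"
    by (rule sum_last2[OF fin])
  finally show ?thesis by (simp add: rowB_def)
qed

definition rowC :: "nat \<Rightarrow> fname \<Rightarrow> fm" where
  "rowC N f = foldr QAll [0..<snd f] (rowB N 0 f)"

lemma sat_rowC: assumes fin: "finite A"
  shows "sat Q A R F s (rowC N f) = (\<forall>bs\<in>tuples A (snd f). real (card A) ^ snd f * (\<Sum>cs\<in>tuples A 2. F (ren N f) (bs @ cs)) = F (N,0) [])"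
proof -
  have "\<And>as. as \<in> tuples A (snd f) \<Longrightarrow> map (upds s [0..<snd f] as) [0..<snd f] = as"
    by (rule upds_map) (auto simp: tuples_len)
  then show ?thesis unfolding rowC_def sat_allQ sat_rowB[OF fin] by simp
qed

lemma ren_inj: "ren N g = ren N f \<Longrightarrow> g = f"
  by (cases g; cases f) (simp add: ren_def)

lemma ren_fresh: "fst g < N \<Longrightarrow> g \<noteq> ren N f" "(N,0) \<noteq> ren N f" "(N,2) \<noteq> ren N f"
  by (auto simp: ren_def)

fun tr :: "nat \<Rightarrow> fname set \<Rightarrow> fm \<Rightarrow> fm" where
  "tr N env (NumAt c i j) = NumAt c (trt N env i) (trt N env j)"
| "tr N env (NegNumAt c i j) = NegNumAt c (trt N env i) (trt N env j)"
| "tr N env (Conj a b) = Conj (tr N env a) (tr N env b)"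
| "tr N env (Disj a b) = Disj (tr N env a) (tr N env b)"
| "tr N env (QEx x a) = QEx x (tr N env a)"
| "tr N env (QAll x a) = QAll x (tr N env a)"
| "tr N env (FEx f a) = FEx (ren N f) (Conj (rowC N f) (tr N (insert f env) a))"
| "tr N env a = a"

lemma dec_upd_agree:
  assumes fa: "\<forall>g\<in>S. fst g < N"
  shows "agree S (dec N A (insert f env) (F(ren N f := d))) ((dec N A env F)(f := decode A (snd f) d))"
  unfolding agree_def
proof (intro ballI allI impI)
  fix g xs assume g: "g \<in> S"
  show "dec N A (insert f env) (F(ren N f := d)) g xs = ((dec N A env F)(f := decode A (snd f) d)) g xs"
  proof (cases "g = f")
    case True then show ?thesis by (simp add: dec_def)
  next
    case False
    have "ren N g \<noteq> ren N f" using False ren_inj by blast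
    moreover have "g \<noteq> ren N f" using fa g ren_fresh(1) by blast
    ultimately show ?thesis using False by (simp add: dec_def)
  qed
qed

lemma encode_agree: assumes fin: "finite A" and n2: "2 \<le> card A"
  shows "agree S (H(f := decode A (snd f) (encode A (snd f) g))) (H(f := g))"
  unfolding agree_def using decode_encode[OF fin n2] by auto

lemma FEx_step:
  assumes fin: "finite A" and n2: "2 \<le> card A"
    and ok: "fm_ok Ops E C a"
    and rowsem: "\<And>d. sat Dist A R (F(ren N f := d)) s (rowC N f) = rowok A (snd f) d"
    and IH: "\<And>d. sat Dist A R (F(ren N f := d)) s X
               = sat (ValsIn {0..1}) A R ((dec N A env F)(f := decode A (snd f) d)) s a"
  shows "(\<exists>d. admissible Dist A (snd f + 2) d \<and> sat Dist A R (F(ren N f := d)) s (Conj (rowC N f) X))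
      = (\<exists>g. admissible (ValsIn {0..1}) A (snd f) g \<and> sat (ValsIn {0..1}) A R ((dec N A env F)(f := g)) s a)"
proof
  assume "\<exists>d. admissible Dist A (snd f + 2) d \<and> sat Dist A R (F(ren N f := d)) s (Conj (rowC N f) X)"
  then obtain d where d: "admissible Dist A (snd f + 2) d" "rowok A (snd f) d"
     "sat (ValsIn {0..1}) A R ((dec N A env F)(f := decode A (snd f) d)) s a"
    using rowsem IH by auto
  show "\<exists>g. admissible (ValsIn {0..1}) A (snd f) g \<and> sat (ValsIn {0..1}) A R ((dec N A env F)(f := g)) s a"
    using decode_adm[OF fin d(1) d(2)] d(3) by blast
next
  assume "\<exists>g. admissible (ValsIn {0..1}) A (snd f) g \<and> sat (ValsIn {0..1}) A R ((dec N A env F)(f := g)) s a"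
  then obtain g where g: "admissible (ValsIn {0..1}) A (snd f) g" "sat (ValsIn {0..1}) A R ((dec N A env F)(f := g)) s a"
    by blast
  let ?d = "encode A (snd f) g"
  have e: "admissible Dist A (snd f + 2) ?d \<and> rowok A (snd f) ?d" by (rule encode_adm[OF fin n2 g(1)])
  have "sat (ValsIn {0..1}) A R ((dec N A env F)(f := decode A (snd f) ?d)) s a"
    using g(2) sat_agree[OF ok encode_agree[OF fin n2]] by blast
  then show "\<exists>d. admissible Dist A (snd f + 2) d \<and> sat Dist A R (F(ren N f := d)) s (Conj (rowC N f) X)"
    using e rowsem IH by auto
qed

lemma tr_sat:
  assumes fin: "finite A" and n2: "2 \<le> card A"
  shows "\<forall>x. s x \<in> A \<Longrightarrow> F (N,0) [] = 1 \<Longrightarrow> \<forall>a\<in>A. F (N,2) [a,a] = 0 \<Longrightarrow> \<forall>g\<in>fnf \<phi>. fst g < N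
    \<Longrightarrow> fm_ok Ops E {0,1} \<phi> \<Longrightarrow> sat Dist A R F s (tr N env \<phi>) = sat (ValsIn {0..1}) A R (dec N A env F) s \<phi>"
proof (induction \<phi> arbitrary: env F s)
  case (NumAt c i j)
  then show ?case using trt_eval[OF fin, of F N s Ops i env] trt_eval[OF fin, of F N s Ops j env] by simp
next
  case (NegNumAt c i j)
  then show ?case using trt_eval[OF fin, of F N s Ops i env] trt_eval[OF fin, of F N s Ops j env] by simp
next
  case (Conj a b) then show ?case by simp
next
  case (Disj a b) then show ?case by simp
next
  case (QEx x a)
  have "\<And>v. v \<in> A \<Longrightarrow> sat Dist A R F (s(x:=v)) (tr N env a) = sat (ValsIn {0..1}) A R (dec N A env F) (s(x:=v)) a"
    by (rule QEx.IH) (use QEx.prems in auto)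
  then show ?case by simp
next
  case (QAll x a)
  have "\<And>v. v \<in> A \<Longrightarrow> sat Dist A R F (s(x:=v)) (tr N env a) = sat (ValsIn {0..1}) A R (dec N A env F) (s(x:=v)) a"
    by (rule QAll.IH) (use QAll.prems in auto)
  then show ?case by simp
next
  case (FEx f a)
  have fa: "\<forall>g\<in>fnf a. fst g < N" using FEx.prems by simp
  have ok: "fm_ok Ops E {0,1} a" using FEx.prems by simp
  have rowsem: "\<And>d. sat Dist A R (F(ren N f := d)) s (rowC N f) = rowok A (snd f) d"
    using ren_fresh(2)[of N f] FEx.prems(2) by (simp add: sat_rowC[OF fin] rowok_def)
  have IH: "\<And>d. sat Dist A R (F(ren N f := d)) s (tr N (insert f env) a)
               = sat (ValsIn {0..1}) A R ((dec N A env F)(f := decode A (snd f) d)) s a"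
  proof -
    fix d
    have "sat Dist A R (F(ren N f := d)) s (tr N (insert f env) a)
        = sat (ValsIn {0..1}) A R (dec N A (insert f env) (F(ren N f := d))) s a"
      by (rule FEx.IH) (use FEx.prems ren_fresh(2,3)[of N f] in auto)
    also have "\<dots> = sat (ValsIn {0..1}) A R ((dec N A env F)(f := decode A (snd f) d)) s a"
      by (rule sat_agree[OF ok dec_upd_agree[OF fa]])
    finally show "sat Dist A R (F(ren N f := d)) s (tr N (insert f env) a)
               = sat (ValsIn {0..1}) A R ((dec N A env F)(f := decode A (snd f) d)) s a" .
  qed
  have snd_ren: "snd (ren N f) = snd f + 2" by (simp add: ren_def)
  show ?case
    unfolding tr.simps sat.simps(11) snd_ren
    by (rule FEx_step[OF fin n2 ok rowsem IH])
qed simp_all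

definition econB :: "nat \<Rightarrow> nat \<Rightarrow> fm" where
  "econB N V = NumAt CEq (NSum [Suc V] (NApp (N,2) [V,V])) (NApp (N,2) [V,V])"

definition rowsB :: "nat \<Rightarrow> nat \<Rightarrow> fname list \<Rightarrow> fm" where
  "rowsB N V cs = foldr (\<lambda>f c. Conj (rowB N V f) c) cs (VEq 0 0)"

definition baseF :: "nat \<Rightarrow> nat \<Rightarrow> nat \<Rightarrow> fname list \<Rightarrow> fm \<Rightarrow> fm" where
  "baseF N V K cs \<phi> = foldr QAll [V..<V+K] (Conj (Conj (econB N V) (rowsB N V cs)) (tr N (set cs) \<phi>))"

fun trP :: "nat \<Rightarrow> nat \<Rightarrow> nat \<Rightarrow> fname list \<Rightarrow> fm \<Rightarrow> fm" where
  "trP N V K cs (FEx f a) = FEx (ren N f) (trP N V K (f#cs) a)"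
| "trP N V K cs (QAll x a) = QAll x (trP N V K cs a)"
| "trP N V K cs a = baseF N V K cs a"

lemma sat_econB: assumes fin: "finite A" and n2: "2 \<le> card A"
  shows "sat Q A R F s (econB N V) = (F (N,2) [s V, s V] = 0)"
proof -
  have "\<And>as. upds s [Suc V] as V = s V" by (simp add: upds_notin)
  then have "teval A F s (NSum [Suc V] (NApp (N,2) [V,V])) = real (card A) * F (N,2) [s V, s V]"
    by (simp add: card_tuples[OF fin])
  moreover have "real (card A) \<noteq> 1" using n2 by simp
  ultimately show ?thesis by (auto simp: econB_def)
qed

lemma sat_rowsB: "sat Q A R F s (rowsB N V cs) = (\<forall>f\<in>set cs. sat Q A R F s (rowB N V f))"
  by (induction cs) (auto simp: rowsB_def)

lemma baseF_sat:
  assumes fin: "finite A" and n2: "2 \<le> card A"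
    and sA: "\<forall>x. s x \<in> A" and u: "F (N,0) [] = 1" and fa: "\<forall>g\<in>fnf \<phi>. fst g < N"
    and ok: "fm_ok Ops E {0,1} \<phi>" and vV: "\<forall>x\<in>vf \<phi>. x < V" and K1: "1 \<le> K"
    and cK: "\<forall>h\<in>set cs. snd h \<le> K"
  shows "sat Dist A R F s (baseF N V K cs \<phi>) = ((\<forall>a\<in>A. F (N,2) [a,a] = 0)
     \<and> (\<forall>h\<in>set cs. rowok A (snd h) (F (ren N h))) \<and> sat (ValsIn {0..1}) A R (dec N A (set cs) F) s \<phi>)"
proof -
  let ?vs = "[V..<V+K]"
  let ?E = "\<forall>a\<in>A. F (N,2) [a,a] = 0"
  let ?Rw = "\<lambda>h bs. real (card A) ^ snd h * (\<Sum>cs\<in>tuples A 2. F (ren N h) (bs @ cs)) = 1"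
  let ?S = "sat (ValsIn {0..1}) A R (dec N A (set cs) F) s \<phi>"
  have ne: "A \<noteq> {}" using n2 by auto
  have pt: "sat Dist A R F (upds s ?vs as) (Conj (Conj (econB N V) (rowsB N V cs)) (tr N (set cs) \<phi>))
      = (F (N,2) [as!0, as!0] = 0 \<and> (\<forall>h\<in>set cs. ?Rw h (take (snd h) as))
         \<and> sat Dist A R F (upds s ?vs as) (tr N (set cs) \<phi>))" if as: "as \<in> tuples A K" for as
  proof -
    have len: "length as = length ?vs" using as by (simp add: tuples_len)
    have s0: "upds s ?vs as V = as ! 0" using upds_nth[of ?vs as 0 s] len K1 by simp
    have tk: "\<And>k. k \<le> K \<Longrightarrow> map (upds s ?vs as) [V..<V+k] = take k as"
    proof -
      fix k assume "k \<le> K"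
      then have "[V..<V+k] = take k ?vs" by simp
      then show "map (upds s ?vs as) [V..<V+k] = take k as"
        using upds_map[of ?vs as s] len by (simp add: take_map[symmetric])
    qed
    show ?thesis using tk cK u by (simp add: sat_econB[OF fin n2] sat_rowsB sat_rowB[OF fin] s0)
  qed
  have LHS: "sat Dist A R F s (baseF N V K cs \<phi>) = (\<forall>as\<in>tuples A K.
        F (N,2) [as!0, as!0] = 0 \<and> (\<forall>h\<in>set cs. ?Rw h (take (snd h) as))
         \<and> sat Dist A R F (upds s ?vs as) (tr N (set cs) \<phi>))"
    unfolding baseF_def sat_allQ using pt by simp
  have E0: "(\<forall>as\<in>tuples A K. F (N,2) [as!0, as!0] = 0) = ?E"
  proof -
    have "(\<forall>as\<in>tuples A K. (\<lambda>l. F (N,2) [l!0, l!0] = 0) (take 1 as)) = (\<forall>l\<in>tuples A 1. F (N,2) [l!0, l!0] = 0)"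
      by (rule ball_tuples_take[OF K1 ne])
    moreover have "\<And>as. as \<in> tuples A K \<Longrightarrow> take 1 as ! 0 = as ! 0" using K1 by (simp add: tuples_len)
    ultimately have "(\<forall>as\<in>tuples A K. F (N,2) [as!0, as!0] = 0) = (\<forall>l\<in>tuples A 1. F (N,2) [l!0, l!0] = 0)"
      by auto
    also have "\<dots> = ?E" using ball_tuples_Suc[of A 0 "\<lambda>l. F (N,2) [l!0, l!0] = 0"] by simp
    finally show ?thesis .
  qed
  have R0: "(\<forall>as\<in>tuples A K. \<forall>h\<in>set cs. ?Rw h (take (snd h) as)) = (\<forall>h\<in>set cs. rowok A (snd h) (F (ren N h)))"
  proof -
    have "(\<forall>as\<in>tuples A K. \<forall>h\<in>set cs. ?Rw h (take (snd h) as)) = (\<forall>h\<in>set cs. \<forall>as\<in>tuples A K. ?Rw h (take (snd h) as))"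
      by blast
    also have "\<dots> = (\<forall>h\<in>set cs. \<forall>bs\<in>tuples A (snd h). ?Rw h bs)"
    proof (rule ball_cong[OF refl])
      fix h assume h: "h \<in> set cs"
      show "(\<forall>as\<in>tuples A K. ?Rw h (take (snd h) as)) = (\<forall>bs\<in>tuples A (snd h). ?Rw h bs)"
        using ball_tuples_take[OF _ ne, of "snd h" K "?Rw h"] cK h by blast
    qed
    finally show ?thesis by (simp add: rowok_def)
  qed
  show ?thesis
  proof (cases ?E)
    case False
    then have "\<not> (\<forall>as\<in>tuples A K. F (N,2) [as!0, as!0] = 0)" using E0 by simp
    then show ?thesis using LHS False by blast
  next
    case True
    have T: "sat Dist A R F (upds s ?vs as) (tr N (set cs) \<phi>) = ?S" if as: "as \<in> tuples A K" for as
    proof -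
      have "sat Dist A R F (upds s ?vs as) (tr N (set cs) \<phi>)
         = sat (ValsIn {0..1}) A R (dec N A (set cs) F) (upds s ?vs as) \<phi>"
        by (rule tr_sat[OF fin n2 _ u True fa ok]) (use sA as in \<open>auto intro: upds_range dest: tuples_set\<close>)
      also have "\<dots> = ?S"
        by (rule sat_vagree) (use vV in \<open>auto simp: upds_notin\<close>)
      finally show ?thesis .
    qed
    obtain as0 where as0: "as0 \<in> tuples A K" using tuples_nonempty[OF ne] by blast
    have "sat Dist A R F s (baseF N V K cs \<phi>) = ((\<forall>as\<in>tuples A K. \<forall>h\<in>set cs. ?Rw h (take (snd h) as)) \<and> ?S)"
      unfolding LHS using E0 True T as0 by blast
    then show ?thesis using R0 True by simp
  qed
qed

lemma FEx_core:
  assumes fin: "finite A" and n2: "2 \<le> card A" and ok: "fm_ok Ops E C a"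
  shows "(\<exists>d. admissible Dist A (snd f + 2) d \<and> rowok A (snd f) d \<and>
            sat (ValsIn {0..1}) A R (H(f := decode A (snd f) d)) s a)
      = (\<exists>g. admissible (ValsIn {0..1}) A (snd f) g \<and> sat (ValsIn {0..1}) A R (H(f := g)) s a)"
proof
  assume "\<exists>d. admissible Dist A (snd f + 2) d \<and> rowok A (snd f) d \<and>
            sat (ValsIn {0..1}) A R (H(f := decode A (snd f) d)) s a"
  then obtain d where d: "admissible Dist A (snd f + 2) d" "rowok A (snd f) d"
     "sat (ValsIn {0..1}) A R (H(f := decode A (snd f) d)) s a" by blast
  show "\<exists>g. admissible (ValsIn {0..1}) A (snd f) g \<and> sat (ValsIn {0..1}) A R (H(f := g)) s a"
    using decode_adm[OF fin d(1) d(2)] d(3) by blast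
next
  assume "\<exists>g. admissible (ValsIn {0..1}) A (snd f) g \<and> sat (ValsIn {0..1}) A R (H(f := g)) s a"
  then obtain g where g: "admissible (ValsIn {0..1}) A (snd f) g" "sat (ValsIn {0..1}) A R (H(f := g)) s a"
    by blast
  let ?d = "encode A (snd f) g"
  have e: "admissible Dist A (snd f + 2) ?d \<and> rowok A (snd f) ?d" by (rule encode_adm[OF fin n2 g(1)])
  have "sat (ValsIn {0..1}) A R (H(f := decode A (snd f) ?d)) s a"
    using g(2) sat_agree[OF ok encode_agree[OF fin n2]] by blast
  then show "\<exists>d. admissible Dist A (snd f + 2) d \<and> rowok A (snd f) d \<and>
            sat (ValsIn {0..1}) A R (H(f := decode A (snd f) d)) s a"
    using e by blast
qed

lemma trP_sat:
  assumes fin: "finite A" and n2: "2 \<le> card A"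
  shows "\<forall>x. s x \<in> A \<Longrightarrow> F (N,0) [] = 1 \<Longrightarrow> \<forall>g\<in>fnf \<phi>. fst g < N \<Longrightarrow> fm_ok Ops E {0,1} \<phi>
    \<Longrightarrow> \<forall>x\<in>vf \<phi>. x < V \<Longrightarrow> 1 \<le> K \<Longrightarrow> \<forall>h\<in>set cs \<union> bndP \<phi>. snd h \<le> K
    \<Longrightarrow> sat Dist A R F s (trP N V K cs \<phi>) = ((\<forall>a\<in>A. F (N,2) [a,a] = 0)
     \<and> (\<forall>h\<in>set cs - bndP \<phi>. rowok A (snd h) (F (ren N h))) \<and> sat (ValsIn {0..1}) A R (dec N A (set cs) F) s \<phi>)"
proof (induction \<phi> arbitrary: cs F s)
  case (QAll x a)
  have ne: "A \<noteq> {}" using n2 by auto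
  have e: "\<And>v. v \<in> A \<Longrightarrow> sat Dist A R F (s(x:=v)) (trP N V K cs a) = ((\<forall>a\<in>A. F (N,2) [a,a] = 0)
     \<and> (\<forall>h\<in>set cs - bndP a. rowok A (snd h) (F (ren N h))) \<and> sat (ValsIn {0..1}) A R (dec N A (set cs) F) (s(x:=v)) a)"
    by (rule QAll.IH) (use QAll.prems in auto)
  show ?case using ne e by (simp only: sat.simps bndP.simps trP.simps) blast
next
  case (FEx f a)
  let ?E = "\<forall>a\<in>A. F (N,2) [a,a] = 0"
  let ?H = "dec N A (set cs) F"
  let ?Rows = "\<forall>h\<in>set cs - bndP (FEx f a). rowok A (snd h) (F (ren N h))"
  have fa: "\<forall>g\<in>fnf a. fst g < N" using FEx.prems by simp
  have ok: "fm_ok Ops E {0,1} a" using FEx.prems by simp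
  have IH: "\<And>d. sat Dist A R (F(ren N f := d)) s (trP N V K (f#cs) a) =
     (?E \<and> (\<forall>h\<in>set (f#cs) - bndP a. rowok A (snd h) ((F(ren N f := d)) (ren N h)))
      \<and> sat (ValsIn {0..1}) A R (?H(f := decode A (snd f) d)) s a)"
  proof -
    fix d
    have "sat Dist A R (F(ren N f := d)) s (trP N V K (f#cs) a) =
     ((\<forall>a\<in>A. (F(ren N f := d)) (N,2) [a,a] = 0) \<and> (\<forall>h\<in>set (f#cs) - bndP a. rowok A (snd h) ((F(ren N f := d)) (ren N h)))
      \<and> sat (ValsIn {0..1}) A R (dec N A (set (f#cs)) (F(ren N f := d))) s a)"
      by (rule FEx.IH) (use FEx.prems ren_fresh(2)[of N f] in auto)
    moreover have "sat (ValsIn {0..1}) A R (dec N A (set (f#cs)) (F(ren N f := d))) s a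
       = sat (ValsIn {0..1}) A R (?H(f := decode A (snd f) d)) s a"
      using sat_agree[OF ok dec_upd_agree[OF fa]] by simp
    moreover have "(\<forall>a\<in>A. (F(ren N f := d)) (N,2) [a,a] = 0) = ?E" using ren_fresh(3)[of N f] by simp
    ultimately show "sat Dist A R (F(ren N f := d)) s (trP N V K (f#cs) a) =
     (?E \<and> (\<forall>h\<in>set (f#cs) - bndP a. rowok A (snd h) ((F(ren N f := d)) (ren N h)))
      \<and> sat (ValsIn {0..1}) A R (?H(f := decode A (snd f) d)) s a)" by simp
  qed
  have snd_ren: "snd (ren N f) = snd f + 2" by (simp add: ren_def)
  have lhs: "sat Dist A R F s (trP N V K cs (FEx f a)) =
     (\<exists>d. admissible Dist A (snd f + 2) d \<and> sat Dist A R (F(ren N f := d)) s (trP N V K (f#cs) a))"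
    by (simp only: trP.simps sat.simps snd_ren)
  show ?case
  proof (cases "f \<in> bndP a")
    case True
    have r: "(\<forall>h\<in>set (f#cs) - bndP a. rowok A (snd h) ((F(ren N f := d)) (ren N h))) = ?Rows" for d
    proof -
      have S1: "set (f#cs) - bndP a = set cs - bndP (FEx f a)" using True by auto
      have eq: "\<And>h. h \<in> set cs - bndP (FEx f a) \<Longrightarrow> (F(ren N f := d)) (ren N h) = F (ren N h)"
      proof -
        fix h assume "h \<in> set cs - bndP (FEx f a)"
        then have "h \<noteq> f" by auto
        then have "ren N h \<noteq> ren N f" using ren_inj by blast
        then show "(F(ren N f := d)) (ren N h) = F (ren N h)" by simp
      qed
      show ?thesis unfolding S1 using eq by simp
    qed
    have ind: "\<And>G. sat (ValsIn {0..1}) A R (?H(f := G)) s a = sat (ValsIn {0..1}) A R ?H s a"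
      using sat_bnd_indep[OF True] by blast
    have ne: "A \<noteq> {}" using n2 by auto
    have L2: "(\<exists>d. admissible Dist A (snd f + 2) d \<and> sat Dist A R (F(ren N f := d)) s (trP N V K (f#cs) a))
       = (\<exists>d. admissible Dist A (snd f + 2) d \<and> (?E \<and> ?Rows \<and> sat (ValsIn {0..1}) A R ?H s a))"
      by (simp only: IH r ind)
    have R2: "sat (ValsIn {0..1}) A R ?H s (FEx f a) = (\<exists>g. admissible (ValsIn {0..1}) A (snd f) g \<and> sat (ValsIn {0..1}) A R ?H s a)"
      by (simp only: sat.simps ind)
    show ?thesis unfolding lhs L2 R2 using ex_adm01[of A "snd f"] ex_dist[OF fin ne, of "snd f + 2"]
      by blast
  next
    case False
    have r: "(\<forall>h\<in>set (f#cs) - bndP a. rowok A (snd h) ((F(ren N f := d)) (ren N h)))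
      = (rowok A (snd f) d \<and> ?Rows)" for d
    proof -
      have S1: "set (f#cs) - bndP a = insert f (set cs - bndP (FEx f a))" using False by auto
      have eq: "\<And>h. h \<in> set cs - bndP (FEx f a) \<Longrightarrow> (F(ren N f := d)) (ren N h) = F (ren N h)"
      proof -
        fix h assume "h \<in> set cs - bndP (FEx f a)"
        then have "h \<noteq> f" by auto
        then have "ren N h \<noteq> ren N f" using ren_inj by blast
        then show "(F(ren N f := d)) (ren N h) = F (ren N h)" by simp
      qed
      show ?thesis unfolding S1 using eq by simp
    qed
    have core: "(\<exists>d. admissible Dist A (snd f + 2) d \<and> rowok A (snd f) d \<and>
            sat (ValsIn {0..1}) A R (?H(f := decode A (snd f) d)) s a)
      = (\<exists>g. admissible (ValsIn {0..1}) A (snd f) g \<and> sat (ValsIn {0..1}) A R (?H(f := g)) s a)"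
      by (rule FEx_core[OF fin n2 ok])
    show ?thesis unfolding lhs using IH r core by (simp only: sat.simps) blast
  qed
qed (simp_all add: baseF_sat[OF fin n2])

lemma trt_ok: "term_ok {OSum} {0,1} t \<Longrightarrow> term_ok {OSum} {} (trt N env t)"
  by (induction t) (auto simp: ren_def)

lemma allQ_props: "fm_ok Ops E C (foldr QAll vs p) = fm_ok Ops E C p"
  "no_negnum (foldr QAll vs p) = no_negnum p"
  "univ_prefix (foldr QAll vs p) = univ_prefix p"
  "almost_conj (foldr QAll vs p) = almost_conj p"
  by (induction vs) auto

lemma rowB_props: "fm_ok {OSum} {CEq} {} (rowB N V f) \<and> no_negnum (rowB N V f) \<and> qfree (rowB N V f)
   \<and> almost_conj (rowB N V f)"
  by (simp add: rowB_def ren_def)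

lemma rowC_props: "fm_ok {OSum} {CEq} {} (rowC N f) \<and> no_negnum (rowC N f)"
  by (simp add: rowC_def allQ_props rowB_props)

lemma tr_ok: "fm_ok {OSum} {CEq} {0,1} \<phi> \<Longrightarrow> fm_ok {OSum} {CEq} {} (tr N env \<phi>)"
  by (induction \<phi> arbitrary: env) (auto simp: trt_ok rowC_props)

lemma tr_nn: "no_negnum \<phi> \<Longrightarrow> no_negnum (tr N env \<phi>)"
  by (induction \<phi> arbitrary: env) (auto simp: rowC_props)

lemma tr_qfree: "qfree \<phi> \<Longrightarrow> qfree (tr N env \<phi>) \<and> has_num (tr N env \<phi>) = has_num \<phi>
   \<and> almost_conj (tr N env \<phi>) = almost_conj \<phi>"
  by (induction \<phi>) auto

lemma econB_props: "fm_ok {OSum} {CEq} {} (econB N V) \<and> no_negnum (econB N V) \<and> qfree (econB N V)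
   \<and> almost_conj (econB N V)"
  by (simp add: econB_def)

lemma rowsB_props: "fm_ok {OSum} {CEq} {} (rowsB N V cs) \<and> no_negnum (rowsB N V cs) \<and> qfree (rowsB N V cs)
   \<and> almost_conj (rowsB N V cs)"
  by (induction cs) (auto simp: rowsB_def rowB_props)

lemma baseF_ok: "fm_ok {OSum} {CEq} {0,1} \<phi> \<Longrightarrow> no_negnum \<phi> \<Longrightarrow>
   fm_ok {OSum} {CEq} {} (baseF N V K cs \<phi>) \<and> no_negnum (baseF N V K cs \<phi>)"
  by (simp add: baseF_def allQ_props econB_props rowsB_props tr_ok tr_nn)

lemma trP_ok: "fm_ok {OSum} {CEq} {0,1} \<phi> \<Longrightarrow> no_negnum \<phi> \<Longrightarrow>
   fm_ok {OSum} {CEq} {} (trP N V K cs \<phi>) \<and> no_negnum (trP N V K cs \<phi>)"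
  by (induction \<phi> arbitrary: cs) (simp_all add: baseF_ok)

lemma baseF_univ: "qfree \<phi> \<Longrightarrow> univ_prefix (baseF N V K cs \<phi>) \<and> (almost_conj \<phi> \<longrightarrow> almost_conj (baseF N V K cs \<phi>))"
  by (simp add: baseF_def allQ_props econB_props rowsB_props tr_qfree)

lemma eso_nonFEx: "(\<forall>f a. p \<noteq> FEx f a) \<Longrightarrow> eso_univ p = univ_prefix p"
  by (cases p) auto

lemma baseF_nonFEx: "\<forall>f a. baseF N V K cs \<phi> \<noteq> FEx f a"
  unfolding baseF_def by (cases "[V..<V+K]") auto

lemma baseF_eso: "qfree \<phi> \<Longrightarrow> eso_univ (baseF N V K cs \<phi>) \<and> (almost_conj \<phi> \<longrightarrow> almost_conj (baseF N V K cs \<phi>))"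
  using baseF_univ eso_nonFEx[OF baseF_nonFEx] by simp

lemma trP_univ: "univ_prefix \<phi> \<Longrightarrow> univ_prefix (trP N V K cs \<phi>) \<and> (almost_conj \<phi> \<longrightarrow> almost_conj (trP N V K cs \<phi>))"
  by (induction \<phi> arbitrary: cs) (simp_all add: baseF_univ)

lemma trP_eso: "eso_univ \<phi> \<Longrightarrow> eso_univ (trP N V K cs \<phi>) \<and> (almost_conj \<phi> \<longrightarrow> almost_conj (trP N V K cs \<phi>))"
proof (induction \<phi> arbitrary: cs)
  case (FEx f a) then show ?case by simp
next
  case (QAll x a) then show ?case using trP_univ[of "QAll x a" N V K cs] by simp
qed (simp_all add: baseF_eso)

definition NN :: "fm \<Rightarrow> nat" where "NN \<phi> = Suc (Max (insert 0 (fst ` fnf \<phi>)))"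
definition VV :: "fm \<Rightarrow> nat" where "VV \<phi> = Suc (Max (insert 0 (vf \<phi>)))"
definition KK :: "fm \<Rightarrow> nat" where "KK \<phi> = Suc (Max (insert 0 (snd ` fnf \<phi>)))"

definition topF :: "fm \<Rightarrow> fm" where
  "topF \<phi> = FEx (NN \<phi>, 0) (FEx (NN \<phi>, 2) (trP (NN \<phi>) (VV \<phi>) (KK \<phi>) [] \<phi>))"

lemma NN_bound: "g \<in> fnf \<phi> \<Longrightarrow> fst g < NN \<phi>"
  unfolding NN_def using finite_fnf[of \<phi>] by (simp add: le_imp_less_Suc)

lemma VV_bound: "x \<in> vf \<phi> \<Longrightarrow> x < VV \<phi>"
  unfolding VV_def using finite_vf[of \<phi>] by (simp add: le_imp_less_Suc)

lemma KK_bound: "g \<in> fnf \<phi> \<Longrightarrow> snd g \<le> KK \<phi>"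
  unfolding KK_def using finite_fnf[of \<phi>] by (simp add: le_SucI)

lemma dec_empty: "dec N A {} F = F"
  by (rule ext)+ (simp add: dec_def)

definition e0 :: "nat set \<Rightarrow> nat list \<Rightarrow> real" where
  "e0 A l = (if l!0 = l!1 then 0 else 1 / (real (card A) * (real (card A) - 1)))"

lemma e0_adm: assumes fin: "finite A" and n2: "2 \<le> card A"
  shows "admissible Dist A 2 (e0 A) \<and> (\<forall>a\<in>A. e0 A [a,a] = 0)"
proof -
  let ?n = "real (card A)"
  let ?c = "1 / (?n * (?n - 1))"
  have "(\<Sum>l\<in>tuples A 2. e0 A l) = (\<Sum>a\<in>A. \<Sum>b\<in>A. if a = b then 0 else ?c)"
    by (simp add: sum_tuples_2[OF fin] e0_def)
  also have "\<dots> = (\<Sum>a\<in>A. 0 + (?n - 1) * ?c)"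
    by (rule sum.cong[OF refl]) (rule sum_if_eq[OF fin])
  also have "\<dots> = ?n * ((?n - 1) * ?c)" by simp
  also have "\<dots> = 1" using n2 by (simp add: field_simps)
  finally have s: "(\<Sum>l\<in>tuples A 2. e0 A l) = 1" .
  have nn: "\<forall>l\<in>tuples A 2. 0 \<le> e0 A l" using n2 by (simp add: e0_def)
  show ?thesis using s nn by (simp add: admissible_def e0_def)
qed

lemma top_sat:
  assumes st: "is_structure X A F" and sA: "\<forall>x. s x \<in> A" and ok: "fm_ok {OSum} {CEq} {0,1} \<phi>"
  shows "sat Dist A R F s (topF \<phi>) = sat (ValsIn {0..1}) A R F s \<phi>"
proof -
  let ?N = "NN \<phi>"
  have fin: "finite A" and n2: "2 \<le> card A" using st by (auto simp: is_structure_def)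
  have ne: "A \<noteq> {}" using n2 by auto
  have fa: "\<forall>g\<in>fnf \<phi>. fst g < ?N" using NN_bound by blast
  have key: "sat Dist A R (F((?N,0) := u, (?N,2) := e)) s (trP ?N (VV \<phi>) (KK \<phi>) [] \<phi>)
     = ((\<forall>a\<in>A. e [a,a] = 0) \<and> sat (ValsIn {0..1}) A R F s \<phi>)"
    if u: "admissible Dist A 0 u" for u e
  proof -
    let ?F2 = "F((?N,0) := u, (?N,2) := e)"
    have u1: "u [] = 1" using u by (simp add: admissible_def)
    have "sat Dist A R ?F2 s (trP ?N (VV \<phi>) (KK \<phi>) [] \<phi>)
       = ((\<forall>a\<in>A. ?F2 (?N,2) [a,a] = 0) \<and> (\<forall>h\<in>set [] - bndP \<phi>. rowok A (snd h) (?F2 (ren ?N h)))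
          \<and> sat (ValsIn {0..1}) A R (dec ?N A (set []) ?F2) s \<phi>)"
    proof (rule trP_sat[OF fin n2 sA _ fa ok])
      show "?F2 (?N, 0) [] = 1" using u1 by simp
      show "\<forall>x\<in>vf \<phi>. x < VV \<phi>" using VV_bound by blast
      show "1 \<le> KK \<phi>" by (simp add: KK_def)
      show "\<forall>h\<in>set [] \<union> bndP \<phi>. snd h \<le> KK \<phi>" using KK_bound bndP_fnf[of \<phi>] by auto
    qed
    also have "sat (ValsIn {0..1}) A R (dec ?N A (set []) ?F2) s \<phi> = sat (ValsIn {0..1}) A R F s \<phi>"
    proof -
      have "agree (fnf \<phi>) ?F2 F" using fa by (auto simp: agree_def)
      then show ?thesis using sat_agree[OF ok] by (simp add: dec_empty)
    qed
    finally have X: "sat Dist A R ?F2 s (trP ?N (VV \<phi>) (KK \<phi>) [] \<phi>)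
       = ((\<forall>a\<in>A. ?F2 (?N,2) [a,a] = 0) \<and> (\<forall>h\<in>set [] - bndP \<phi>. rowok A (snd h) (?F2 (ren ?N h)))
          \<and> sat (ValsIn {0..1}) A R F s \<phi>)" .
    have E1: "(\<forall>a\<in>A. ?F2 (?N,2) [a,a] = 0) = (\<forall>a\<in>A. e [a,a] = 0)" by simp
    have R1: "(\<forall>h\<in>set [] - bndP \<phi>. rowok A (snd h) (?F2 (ren ?N h))) = True" by simp
    show ?thesis using X by (simp only: E1 R1 simp_thms)
  qed
  have ex_u: "admissible Dist A 0 (\<lambda>_. 1)" by (simp add: admissible_def)
  have "sat Dist A R F s (topF \<phi>) = (\<exists>u. admissible Dist A 0 u \<and> (\<exists>e. admissible Dist A 2 e \<and>
      sat Dist A R (F((?N,0) := u, (?N,2) := e)) s (trP ?N (VV \<phi>) (KK \<phi>) [] \<phi>)))"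
    by (simp add: topF_def)
  also have "\<dots> = (\<exists>u. admissible Dist A 0 u \<and> (\<exists>e. admissible Dist A 2 e \<and>
      ((\<forall>a\<in>A. e [a,a] = 0) \<and> sat (ValsIn {0..1}) A R F s \<phi>)))"
    using key by blast
  also have "\<dots> = sat (ValsIn {0..1}) A R F s \<phi>"
    using ex_u e0_adm[OF fin n2] by blast
  finally show ?thesis .
qed

lemma top_syn: "fm_ok {OSum} {CEq} {0,1} \<phi> \<Longrightarrow> no_negnum \<phi> \<Longrightarrow>
   fm_ok {OSum} {CEq} {} (topF \<phi>) \<and> no_negnum (topF \<phi>)"
  by (simp add: topF_def trP_ok)

lemma top_eso: "eso_univ \<phi> \<Longrightarrow> almost_conj \<phi> \<Longrightarrow> eso_univ (topF \<phi>) \<and> almost_conj (topF \<phi>)"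
  using trP_eso by (simp add: topF_def)

lemma part1: "leq_on (ValsIn {0..1}) (ValsIn {0..1}, L_ESO {OSum} {CEq} {0,1}) (Dist, L_ESO {OSum} {CEq} {})"
  unfolding leq_on_def
proof (intro allI impI)
  fix \<phi> assume "snd (ValsIn {0..1}, L_ESO {OSum} {CEq} {0,1}) \<phi>"
  then have ok: "fm_ok {OSum} {CEq} {0,1} \<phi>" "no_negnum \<phi>" by (auto simp: L_ESO_def)
  show "\<exists>\<psi>. snd (Dist, L_ESO {OSum} {CEq} {}) \<psi> \<and>
         (\<forall>A R F s. is_structure (ValsIn {0..1}) A F \<longrightarrow> (\<forall>x. s x \<in> A) \<longrightarrow>
            sat (fst (ValsIn {0..1}, L_ESO {OSum} {CEq} {0,1})) A R F s \<phi> =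
            sat (fst (Dist, L_ESO {OSum} {CEq} {})) A R F s \<psi>)"
    by (rule exI[of _ "topF \<phi>"]) (auto simp: L_ESO_def top_syn[OF ok] top_sat[OF _ _ ok(1)])
qed

lemma part1r: "leq_on (ValsIn {0..1})
   (ValsIn {0..1}, \<lambda>\<phi>. L_ESO {OSum} {CEq} {0,1} \<phi> \<and> almost_conj \<phi> \<and> eso_univ \<phi>)
   (Dist, \<lambda>\<phi>. L_ESO {OSum} {CEq} {} \<phi> \<and> almost_conj \<phi> \<and> eso_univ \<phi>)"
  unfolding leq_on_def
proof (intro allI impI)
  fix \<phi> assume "snd (ValsIn {0..1}, \<lambda>\<phi>. L_ESO {OSum} {CEq} {0,1} \<phi> \<and> almost_conj \<phi> \<and> eso_univ \<phi>) \<phi>"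
  then have ok: "fm_ok {OSum} {CEq} {0,1} \<phi>" "no_negnum \<phi>" "almost_conj \<phi>" "eso_univ \<phi>"
    by (auto simp: L_ESO_def)
  show "\<exists>\<psi>. snd (Dist, \<lambda>\<phi>. L_ESO {OSum} {CEq} {} \<phi> \<and> almost_conj \<phi> \<and> eso_univ \<phi>) \<psi> \<and>
         (\<forall>A R F s. is_structure (ValsIn {0..1}) A F \<longrightarrow> (\<forall>x. s x \<in> A) \<longrightarrow>
            sat (fst (ValsIn {0..1}, \<lambda>\<phi>. L_ESO {OSum} {CEq} {0,1} \<phi> \<and> almost_conj \<phi> \<and> eso_univ \<phi>)) A R F s \<phi> =
            sat (fst (Dist, \<lambda>\<phi>. L_ESO {OSum} {CEq} {} \<phi> \<and> almost_conj \<phi> \<and> eso_univ \<phi>)) A R F s \<psi>)"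
    by (rule exI[of _ "topF \<phi>"])
       (auto simp: L_ESO_def top_syn[OF ok(1,2)] top_eso[OF ok(4,3)] top_sat[OF _ _ ok(1)])
qed

theorem mainTheorem8:
  shows "equiv_on (ValsIn {0..1})
           (ValsIn {0..1}, L_ESO {OSum} {CEq} {0, 1})
           (Dist, L_ESO {OSum} {CEq} {})
       \<and> equiv_on (ValsIn {0..1})
           (ValsIn {0..1}, \<lambda>\<phi>. L_ESO {OSum} {CEq} {0, 1} \<phi> \<and> almost_conj \<phi> \<and> eso_univ \<phi>)
           (Dist, \<lambda>\<phi>. L_ESO {OSum} {CEq} {} \<phi> \<and> almost_conj \<phi> \<and> eso_univ \<phi>)"
  unfolding equiv_on_def using part1 part1r part2 part2r by blast

end
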